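(* With the setup below, \[ \bar\nabla_aP^{ab}=\bar\nabla_a\Pi^{ab}=\bar\nabla_aP^a{}_b=\bar\nabla_a\Pi^a{}_b=0, \] \[ P^{bc}\bar\nabla_aP_{bc}=-E_a,\quad P_{bc}\bar\nabla_aP^{bc}=E_a,\quad \Pi^{bc}\bar\nabla_a\Pi_{bc}=-W_a,\quad \Pi_{bc}\bar\nabla_a\Pi^{bc}=W_a, \] \[ P^d{}_r\bar\nabla_b\Pi^r{}_d=\Pi^d{}_r\bar\nabla_bP^r{}_d=P^{dr}\bar\nabla_dP_{rb}=\Pi^{dr}\bar\nabla_d\Pi_{rb}=0 . \]
   Context: Let $V$ be an $n$-dimensional smooth manifold with a $C^\infty$ pseudo-Riemannian metric $g_{ab}$ of arbitrary signature, Levi-Civita connection $\nabla$ with connection coefficients $\gamma^a{}_{bc}$; indices are raised and lowered with $g$. Let $P_{ab}$, $\Pi_{ab}$ be smooth symmetric tensor fields forming at each point a pair of orthogonal complementary projectors: $P_{ab}+\Pi_{ab}=g_{ab}$, $P_{aq}P^q{}_b=P_{ab}$, $\Pi_{aq}\Pi^q{}_b=\Pi_{ab}$, $P_{aq}\Pi^q{}_b=0$; let $p=P^a{}_a$ (the constant rank of $P$), with $1\le p\le n-1$. Define $M_{abc}=\nabla_bP_{ac}+\nabla_cP_{ab}-\nabla_aP_{bc}$, $E_a=M_{acb}P^{cb}$, $W_a=-M_{acb}\Pi^{cb}$. The bi-conformal connection $\bar\nabla$ is the torsion-free linear connection with coefficients $\bar\gamma^a{}_{bc}=\gamma^a{}_{bc}+L^a{}_{bc}$,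 where $L^a{}_{bc}=\frac{1}{2p}(E_bP^a{}_c+E_cP^a{}_b)+\frac{1}{2(n-p)}(W_b\Pi^a{}_c+W_c\Pi^a{}_b)+\frac12(P^a{}_q-\Pi^a{}_q)M^q{}_{bc}$; thus on any tensor $\bar\nabla_a$ equals $\nabla_a$ plus a term $+L^{a_s}{}_{ac}X^{\dots c\dots}$ for each contravariant index and $-L^{c}{}_{ab_s}X_{\dots c\dots}$ for each covariant index. In expressions such as $\bar\nabla_aP^{ab}$, the tensor $P^{ab}=g^{ac}g^{bd}P_{cd}$ is formed first and then differentiated. *)

theory Defs
  imports "HOL-Analysis.Analysis"
begin

text \<open>Points are x :: real^'n (a chart domain U, open in R^n,
  n = CARD('n)). A (0,2) / (2,0) / (1,1) tensor field is a map x \<mapsto> real^'n^'n,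
  component T x $ a $ b. Connection coefficients: Gam x a b c = Gamma^a_{bc}.\<close>

type_synonym ('n) tfield = "real^'n \<Rightarrow> real^'n^'n"
type_synonym 'n conn = "real^'n \<Rightarrow> 'n \<Rightarrow> 'n \<Rightarrow> 'n \<Rightarrow> real"

definition pd :: "(real^'n::finite \<Rightarrow> real) \<Rightarrow> 'n \<Rightarrow> real^'n \<Rightarrow> real" where
  "pd f c x = frechet_derivative f (at x) (axis c 1)"

fun Ck_on :: "nat \<Rightarrow> (real^'n::finite) set \<Rightarrow> (real^'n \<Rightarrow> real) \<Rightarrow> bool" where
  "Ck_on 0 U f = continuous_on U f"
| "Ck_on (Suc k) U f = ((\<forall>x\<in>U. f differentiable (at x)) \<and> (\<forall>c. Ck_on k U (\<lambda>x. pd f c x)))"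

definition smooth_on :: "(real^'n::finite) set \<Rightarrow> (real^'n \<Rightarrow> real) \<Rightarrow> bool" where
  "smooth_on U f = (\<forall>k. Ck_on k U f)"

definition smooth_tfield :: "(real^'n) set \<Rightarrow> ('n::finite) tfield \<Rightarrow> bool" where
  "smooth_tfield U T = (\<forall>a b. smooth_on U (\<lambda>x. T x $ a $ b))"

definition ginv :: "('n::finite) tfield \<Rightarrow> ('n::finite) tfield" where
  "ginv g x = matrix_inv (g x)"

definition up2 :: "('n::finite) tfield \<Rightarrow> ('n::finite) tfield \<Rightarrow> ('n::finite) tfield" where
  "up2 g T x = (\<chi> a b. \<Sum>c\<in>UNIV. \<Sum>d\<in>UNIV. ginv g x $ a $ c * ginv g x $ b $ d * T x $ c $ d)"

definition up1 :: "('n::finite) tfield \<Rightarrow> ('n::finite) tfield \<Rightarrow> ('n::finite) tfield" where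
  "up1 g T x = (\<chi> a b. \<Sum>c\<in>UNIV. ginv g x $ a $ c * T x $ c $ b)"

definition christoffel :: "('n::finite) tfield \<Rightarrow> ('n::finite) conn" where
  "christoffel g x a b c = (1/2) * (\<Sum>d\<in>UNIV. ginv g x $ a $ d *
      (pd (\<lambda>y. g y $ d $ c) b x + pd (\<lambda>y. g y $ d $ b) c x - pd (\<lambda>y. g y $ b $ c) d x))"

text \<open>Covariant derivatives with respect to connection coefficients Gam; the derivative
  index is the first argument after x.\<close>
definition cov02 :: "('n::finite) conn \<Rightarrow> ('n::finite) tfield \<Rightarrow> real^'n \<Rightarrow> 'n \<Rightarrow> 'n \<Rightarrow> 'n \<Rightarrow> real" where
  "cov02 Gam T x a b c = pd (\<lambda>y. T y $ b $ c) a x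
      - (\<Sum>d\<in>UNIV. Gam x d a b * T x $ d $ c) - (\<Sum>d\<in>UNIV. Gam x d a c * T x $ b $ d)"

definition cov20 :: "('n::finite) conn \<Rightarrow> ('n::finite) tfield \<Rightarrow> real^'n \<Rightarrow> 'n \<Rightarrow> 'n \<Rightarrow> 'n \<Rightarrow> real" where
  "cov20 Gam T x a b c = pd (\<lambda>y. T y $ b $ c) a x
      + (\<Sum>d\<in>UNIV. Gam x b a d * T x $ d $ c) + (\<Sum>d\<in>UNIV. Gam x c a d * T x $ b $ d)"

text \<open>(1,1) tensor T^b_c (first index contravariant).\<close>
definition cov11 :: "('n::finite) conn \<Rightarrow> ('n::finite) tfield \<Rightarrow> real^'n \<Rightarrow> 'n \<Rightarrow> 'n \<Rightarrow> 'n \<Rightarrow> real" where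
  "cov11 Gam T x a b c = pd (\<lambda>y. T y $ b $ c) a x
      + (\<Sum>d\<in>UNIV. Gam x b a d * T x $ d $ c) - (\<Sum>d\<in>UNIV. Gam x d a c * T x $ b $ d)"

definition nabla :: "('n::finite) tfield \<Rightarrow> ('n::finite) tfield \<Rightarrow> real^'n \<Rightarrow> 'n \<Rightarrow> 'n \<Rightarrow> 'n \<Rightarrow> real" where
  "nabla g T = cov02 (christoffel g) T"

definition Mten :: "('n::finite) tfield \<Rightarrow> ('n::finite) tfield \<Rightarrow> real^'n \<Rightarrow> 'n \<Rightarrow> 'n \<Rightarrow> 'n \<Rightarrow> real" where
  "Mten g P x a b c = nabla g P x b a c + nabla g P x c a b - nabla g P x a b c"

definition Evec :: "('n::finite) tfield \<Rightarrow> ('n::finite) tfield \<Rightarrow> real^'n \<Rightarrow> 'n \<Rightarrow> real" where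
  "Evec g P x a = (\<Sum>c\<in>UNIV. \<Sum>b\<in>UNIV. Mten g P x a c b * up2 g P x $ c $ b)"

definition Wvec :: "('n::finite) tfield \<Rightarrow> ('n::finite) tfield \<Rightarrow> ('n::finite) tfield \<Rightarrow> real^'n \<Rightarrow> 'n \<Rightarrow> real" where
  "Wvec g P Q x a = - (\<Sum>c\<in>UNIV. \<Sum>b\<in>UNIV. Mten g P x a c b * up2 g Q x $ c $ b)"

text \<open>L^a_{bc}, with p the rank of P and n = CARD('n).\<close>
definition Lten :: "nat \<Rightarrow> ('n::finite) tfield \<Rightarrow> ('n::finite) tfield \<Rightarrow> ('n::finite) tfield \<Rightarrow> ('n::finite) conn" where
  "Lten p g P Q x a b c =
     (1 / (2 * real p)) * (Evec g P x b * up1 g P x $ a $ c + Evec g P x c * up1 g P x $ a $ b)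
   + (1 / (2 * (real CARD('n) - real p))) *
        (Wvec g P Q x b * up1 g Q x $ a $ c + Wvec g P Q x c * up1 g Q x $ a $ b)
   + (1/2) * (\<Sum>q\<in>UNIV. (up1 g P x $ a $ q - up1 g Q x $ a $ q) *
        (\<Sum>d\<in>UNIV. ginv g x $ q $ d * Mten g P x d b c))"

definition biconf :: "nat \<Rightarrow> ('n::finite) tfield \<Rightarrow> ('n::finite) tfield \<Rightarrow> ('n::finite) tfield \<Rightarrow> ('n::finite) conn" where
  "biconf p g P Q x a b c = christoffel g x a b c + Lten p g P Q x a b c"

end

theory Submission
  imports Defs
begin

lemma mm_add_r: "((A::real^'n^'m) + B) ** C = A ** C + B ** C"
  by (simp add: matrix_matrix_mult_def vec_eq_iff sum.distrib ring_distribs)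
lemma mm_diff_l: "(A::real^'n^'m) ** (B - C) = A ** B - A ** C"
  by (simp add: matrix_matrix_mult_def vec_eq_iff sum_subtractf ring_distribs)
lemma mm_diff_r: "((A::real^'n^'m) - B) ** C = A ** C - B ** C"
  by (simp add: matrix_matrix_mult_def vec_eq_iff sum_subtractf ring_distribs)
lemma mm_neg_l: "(- (A::real^'n^'m)) ** B = - (A ** B)"
  by (simp add: matrix_matrix_mult_def vec_eq_iff sum_negf)
lemma mm_neg_r: "(A::real^'n^'m) ** (- B) = - (A ** B)"
  by (simp add: matrix_matrix_mult_def vec_eq_iff sum_negf)
lemma mm_entry: "((A::real^'n^'m) ** B) $ i $ j = (\<Sum>k\<in>UNIV. A $ i $ k * B $ k $ j)"
  by (simp add: matrix_matrix_mult_def)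
lemma tr_entry: "(transpose (A::real^'n^'m)) $ i $ j = A $ j $ i"
  by (simp add: transpose_def)

lemma transpose_zero[simp]: "transpose (0::real^'n^'m) = 0"
  by (simp add: transpose_def vec_eq_iff)

lemmas mx = matrix_mul_assoc matrix_add_ldistrib mm_add_r mm_diff_l mm_diff_r mm_neg_l mm_neg_r
  matrix_transpose_mul

locale bc =
  fixes g gi P Q :: "real^'n::finite^'n" and N :: "'n \<Rightarrow> real^'n^'n" and p :: real
  assumes g_sym: "transpose g = g" and gi_sym: "transpose gi = gi"
    and gig: "gi ** g = mat 1" and ggi: "g ** gi = mat 1"
    and P_sym: "transpose P = P" and Q_sym: "transpose Q = Q"
    and PQ: "P + Q = g"
    and Pproj: "P ** gi ** P = P" and Qproj: "Q ** gi ** Q = Q" and orth: "P ** gi ** Q = 0"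
    and N_sym: "\<And>a. transpose (N a) = N a"
    and Nrel: "\<And>a. N a = N a ** gi ** P + P ** gi ** N a"
    and rank: "trace (gi ** P) = p"
    and ppos: "p > 0" and qpos: "real CARD('n) - p > 0"
begin

definition "M a b c = N b $ a $ c + N c $ a $ b - N a $ b $ c"
definition "P2 = gi ** P ** gi"
definition "Q2 = gi ** Q ** gi"
definition "p1 = gi ** P"
definition "q1 = gi ** Q"
definition "E a = (\<Sum>c\<in>UNIV. \<Sum>b\<in>UNIV. M a c b * P2 $ c $ b)"
definition "W a = - (\<Sum>c\<in>UNIV. \<Sum>b\<in>UNIV. M a c b * Q2 $ c $ b)"
definition "L a b c = (1 / (2 * p)) * (E b * p1 $ a $ c + E c * p1 $ a $ b)
   + (1 / (2 * (real CARD('n) - p))) * (W b * q1 $ a $ c + W c * q1 $ a $ b)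
   + (1/2) * (\<Sum>q\<in>UNIV. (p1 $ a $ q - q1 $ a $ q) * (\<Sum>d\<in>UNIV. gi $ q $ d * M d b c))"

lemma QgiP: "Q ** gi ** P = 0"
proof -
  have "transpose (P ** gi ** Q) = Q ** gi ** P"
    by (simp add: matrix_transpose_mul P_sym Q_sym gi_sym matrix_mul_assoc)
  thus ?thesis using orth by simp
qed

lemma p1q1: "gi ** P + gi ** Q = mat 1"
  by (simp add: matrix_add_ldistrib[symmetric] PQ gig)
lemma P2Q2: "gi ** P ** gi + gi ** Q ** gi = gi"
  by (simp add: mm_add_r[symmetric] p1q1)

lemma Pext: "X ** P ** gi ** P = X ** P"
  by (metis Pproj matrix_mul_assoc)
lemma Qext: "X ** Q ** gi ** Q = X ** Q"
  by (metis Qproj matrix_mul_assoc)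
lemma orthext: "X ** P ** gi ** Q = 0"
  by (metis orth matrix_mul_assoc times0_right)
lemma QgiPext: "X ** Q ** gi ** P = 0"
  by (metis QgiP matrix_mul_assoc times0_right)
lemma gigext: "X ** gi ** g = X"
  by (metis gig matrix_mul_assoc matrix_mul_rid)
lemma ggiext: "X ** g ** gi = X"
  by (metis ggi matrix_mul_assoc matrix_mul_rid)

lemmas alg = mx Pproj Qproj orth QgiP Pext Qext orthext QgiPext gig ggi gigext ggiext

lemma PNP: "P ** gi ** N a ** gi ** P = 0"
proof -
  have "P ** gi ** N a ** gi ** P = P ** gi ** (N a ** gi ** P + P ** gi ** N a) ** gi ** P"
    using Nrel[of a] by simp
  also have "\<dots> = P ** gi ** N a ** gi ** P + P ** gi ** N a ** gi ** P"
    by (simp add: alg)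
  finally show ?thesis by simp
qed

lemma Nrel2: "N a = N a ** gi ** Q + Q ** gi ** N a"
proof -
  have Q: "Q = g - P" using PQ by (simp add: algebra_simps)
  have "N a ** gi ** Q + Q ** gi ** N a = 2 *\<^sub>R N a - (N a ** gi ** P + P ** gi ** N a)"
    unfolding Q by (simp add: alg scaleR_2)
  also have "\<dots> = N a" using Nrel[of a] by (simp add: scaleR_2)
  finally show ?thesis by simp
qed

lemma QNQ: "Q ** gi ** N a ** gi ** Q = 0"
proof -
  have "Q ** gi ** N a ** gi ** Q = Q ** gi ** (N a ** gi ** Q + Q ** gi ** N a) ** gi ** Q"
    using Nrel2[of a] by simp
  also have "\<dots> = Q ** gi ** N a ** gi ** Q + Q ** gi ** N a ** gi ** Q"
    by (simp add: alg)
  finally show ?thesis by simp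
qed

end

context bc begin
lemma P2_sym: "transpose (gi ** P ** gi) = gi ** P ** gi"
  by (simp add: matrix_transpose_mul gi_sym P_sym matrix_mul_assoc)
lemma Q2_sym: "transpose (gi ** Q ** gi) = gi ** Q ** gi"
  by (simp add: matrix_transpose_mul gi_sym Q_sym matrix_mul_assoc)

lemma sym_entry: "transpose S = S \<Longrightarrow> S $ i $ j = S $ j $ i"
proof -
  assume S: "transpose S = S"
  have "S $ i $ j = (transpose S) $ j $ i" by (simp add: transpose_def)
  thus ?thesis using S by simp
qed

lemma contr_tr: "transpose (X::real^'n^'n) = X \<Longrightarrow> (\<Sum>b\<in>UNIV. \<Sum>c\<in>UNIV. A $ b $ c * X $ b $ c) = trace (A ** X)"
  apply (simp add: trace_def mm_entry)
  apply (intro sum.cong refl)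
  by (simp add: sym_entry[of X])

lemma trace_P2N: "trace (gi ** P ** gi ** N a) = 0"
proof -
  have "trace (gi ** P ** gi ** N a) = trace (gi ** (P ** gi ** N a))" by (simp add: matrix_mul_assoc)
  also have "\<dots> = trace (P ** gi ** N a ** gi)" by (simp add: trace_mul_sym[of gi])
  also have "\<dots> = trace (P ** gi ** P ** gi ** N a ** gi)" by (simp add: Pproj)
  also have "\<dots> = trace (P ** (gi ** P ** gi ** N a ** gi))" by (simp add: matrix_mul_assoc)
  also have "\<dots> = trace (gi ** P ** gi ** N a ** gi ** P)" by (simp add: trace_mul_sym[of P])
  also have "\<dots> = trace (gi ** (P ** gi ** N a ** gi ** P))" by (simp add: matrix_mul_assoc)
  also have "\<dots> = 0" by (simp add: PNP trace_def)
  finally show ?thesis .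
qed

lemma trace_Q2N: "trace (gi ** Q ** gi ** N a) = 0"
proof -
  have "trace (gi ** Q ** gi ** N a) = trace (gi ** (Q ** gi ** N a))" by (simp add: matrix_mul_assoc)
  also have "\<dots> = trace (Q ** gi ** N a ** gi)" by (simp add: trace_mul_sym[of gi])
  also have "\<dots> = trace (Q ** gi ** Q ** gi ** N a ** gi)" by (simp add: Qproj)
  also have "\<dots> = trace (Q ** (gi ** Q ** gi ** N a ** gi))" by (simp add: matrix_mul_assoc)
  also have "\<dots> = trace (gi ** Q ** gi ** N a ** gi ** Q)" by (simp add: trace_mul_sym[of Q])
  also have "\<dots> = trace (gi ** (Q ** gi ** N a ** gi ** Q))" by (simp add: matrix_mul_assoc)
  also have "\<dots> = 0" by (simp add: QNQ trace_def)
  finally show ?thesis .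
qed

definition Tv :: "real^'n^'n \<Rightarrow> 'n \<Rightarrow> real" where "Tv S a = (\<Sum>c\<in>UNIV. (N c ** S) $ a $ c)"

lemma Tv_add: "Tv (S1 + S2) a = Tv S1 a + Tv S2 a"
  by (simp add: Tv_def matrix_add_ldistrib sum.distrib)

lemma E_sum: "transpose (S::real^'n^'n) = S \<Longrightarrow>
   (\<Sum>c\<in>UNIV. \<Sum>b\<in>UNIV. M a c b * S $ c $ b) = 2 * Tv S a - trace (S ** N a)"
proof -
  assume S: "transpose S = S"
  have 1: "(\<Sum>c\<in>UNIV. \<Sum>b\<in>UNIV. N c $ a $ b * S $ c $ b) = Tv S a"
    unfolding Tv_def by (simp add: mm_entry sym_entry[OF S])
  have 2: "(\<Sum>c\<in>UNIV. \<Sum>b\<in>UNIV. N b $ a $ c * S $ c $ b) = Tv S a"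
    unfolding Tv_def by (subst sum.swap) (simp add: mm_entry sym_entry[OF S])
  have 3: "(\<Sum>c\<in>UNIV. \<Sum>b\<in>UNIV. N a $ c $ b * S $ c $ b) = trace (S ** N a)"
    by (subst contr_tr[symmetric]) (auto simp: N_sym mult.commute)
  show ?thesis
    unfolding M_def using 1 2 3
    by (simp add: ring_distribs sum.distrib sum_subtractf)
qed

lemma E_Tv: "E a = 2 * Tv (gi ** P ** gi) a"
  unfolding E_def P2_def by (simp add: E_sum P2_sym trace_P2N)

lemma W_Tv: "W a = - 2 * Tv (gi ** Q ** gi) a"
  unfolding W_def Q2_def by (simp add: E_sum Q2_sym trace_Q2N)

definition vm :: "('n \<Rightarrow> real) \<Rightarrow> real^'n^'n \<Rightarrow> 'n \<Rightarrow> real" where "vm v A d = (\<Sum>a\<in>UNIV. v a * A $ a $ d)"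

lemma vm_mm: "vm v (A ** B) d = (\<Sum>l\<in>UNIV. vm v A l * B $ l $ d)"
  unfolding vm_def mm_entry sum_distrib_left sum_distrib_right
  by (subst sum.swap) (simp add: mult.assoc)
lemma vm_add: "vm v (A + B) d = vm v A d + vm v B d"
  by (simp add: vm_def ring_distribs sum.distrib)
lemma vm_diff: "vm v (A - B) d = vm v A d - vm v B d"
  by (simp add: vm_def ring_distribs sum_subtractf)
lemma vm_mat1: "vm v (mat 1) d = v d"
  by (simp add: vm_def mat_def if_distrib cong: if_cong)
lemma vm_zero: "vm v 0 d = 0"
  by (simp add: vm_def)

lemma vm_Tv: "vm (\<lambda>a. Tv S a) A d = (\<Sum>c\<in>UNIV. (transpose A ** N c ** S) $ d $ c)"
proof -
  have "vm (\<lambda>a. Tv S a) A d = (\<Sum>c\<in>UNIV. \<Sum>a\<in>UNIV. A $ a $ d * (N c ** S) $ a $ c)"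
    unfolding vm_def Tv_def sum_distrib_right by (subst sum.swap) (simp add: mult.commute)
  also have "\<dots> = (\<Sum>c\<in>UNIV. (transpose A ** (N c ** S)) $ d $ c)"
    by (simp only: mm_entry tr_entry)
  finally show ?thesis by (simp add: matrix_mul_assoc)
qed

lemma vm_E: "vm E A d = 2 * (\<Sum>c\<in>UNIV. (transpose A ** N c ** (gi ** P ** gi)) $ d $ c)"
proof -
  have "vm E A d = 2 * vm (\<lambda>a. Tv (gi ** P ** gi) a) A d"
    by (simp add: vm_def E_Tv sum_distrib_left mult.assoc)
  thus ?thesis by (simp add: vm_Tv)
qed

lemma vm_W: "vm W A d = - 2 * (\<Sum>c\<in>UNIV. (transpose A ** N c ** (gi ** Q ** gi)) $ d $ c)"
proof -
  have "vm W A d = - 2 * vm (\<lambda>a. Tv (gi ** Q ** gi) a) A d"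
    by (simp add: vm_def W_Tv sum_distrib_left mult.assoc)
  thus ?thesis by (simp add: vm_Tv)
qed

lemma PNPext: "X ** P ** gi ** N a ** gi ** P = 0"
  by (metis PNP matrix_mul_assoc times0_right)
lemma PNPr: "P ** gi ** N a ** gi ** P ** Y = 0"
  by (simp add: PNP)
lemma QNQr: "Q ** gi ** N a ** gi ** Q ** Y = 0"
  by (simp add: QNQ)
lemma QNQext: "X ** Q ** gi ** N a ** gi ** Q = 0"
  by (metis QNQ matrix_mul_assoc times0_right)

lemma E_p1: "vm E (gi ** P) d = 0"
  unfolding vm_E by (simp add: matrix_transpose_mul gi_sym P_sym matrix_mul_assoc PNPext PNPr)
lemma E_P2: "vm E (gi ** P ** gi) d = 0"
  unfolding vm_E by (simp add: matrix_transpose_mul gi_sym P_sym matrix_mul_assoc PNPext PNPr)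
lemma W_q1: "vm W (gi ** Q) d = 0"
  unfolding vm_W by (simp add: matrix_transpose_mul gi_sym Q_sym matrix_mul_assoc QNQext QNQr)
lemma W_Q2: "vm W (gi ** Q ** gi) d = 0"
  unfolding vm_W by (simp add: matrix_transpose_mul gi_sym Q_sym matrix_mul_assoc QNQext QNQr)

lemma q1_eq: "gi ** Q = mat 1 - gi ** P"
  using p1q1 by (simp add: algebra_simps)
lemma p1_eq: "gi ** P = mat 1 - gi ** Q"
  using p1q1 by (simp add: algebra_simps)
lemma Q2_eq: "gi ** Q ** gi = gi - gi ** P ** gi"
  using P2Q2 by (simp add: algebra_simps)
lemma P2_eq: "gi ** P ** gi = gi - gi ** Q ** gi"
  using P2Q2 by (simp add: algebra_simps)

lemma E_q1: "vm E (gi ** Q) d = E d"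
  unfolding q1_eq vm_diff vm_mat1 E_p1 by simp
lemma W_p1: "vm W (gi ** P) d = W d"
  unfolding p1_eq vm_diff vm_mat1 W_q1 by simp
lemma E_Q2: "vm E (gi ** Q ** gi) d = vm E gi d"
  unfolding Q2_eq vm_diff E_P2 by simp
lemma W_P2: "vm W (gi ** P ** gi) d = vm W gi d"
  unfolding P2_eq vm_diff W_Q2 by simp

lemma Tv_gi: "Tv gi a = E a / 2 - W a / 2"
proof -
  have "Tv gi a = Tv (gi ** P ** gi) a + Tv (gi ** Q ** gi) a"
    using Tv_add[of "gi ** P ** gi" "gi ** Q ** gi" a] P2Q2 by simp
  thus ?thesis by (simp add: E_Tv W_Tv)
qed

end

context bc begin

lemma N_entry_sym: "N a $ b $ c = N a $ c $ b"
  using sym_entry[OF N_sym[of a]] .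

lemma Msym: "M d b c = M d c b"
  unfolding M_def using N_entry_sym[of d b c] by simp

lemma Lsym: "L a b c = L a c b"
  unfolding L_def using Msym by (simp add: algebra_simps)

lemma sum_mm3: "(\<Sum>q\<in>UNIV. X $ a $ q * (\<Sum>d\<in>UNIV. Y $ q $ d * f d)) = (\<Sum>d\<in>UNIV. (X ** Y) $ a $ d * (f d::real))"
  unfolding mm_entry sum_distrib_left sum_distrib_right
  by (subst sum.swap) (simp add: mult.assoc)

definition "R = gi ** P ** gi - gi ** Q ** gi"

lemma R_sym: "transpose R = R"
proof -
  have "transpose (A - B) = transpose A - transpose (B::real^'n^'n)" for A B
    by (simp add: transpose_def vec_eq_iff)
  thus ?thesis unfolding R_def using P2_sym Q2_sym by simp
qed

lemma L_alt: "L a b c = (1 / (2 * p)) * (E b * (gi ** P) $ a $ c + E c * (gi ** P) $ a $ b)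
   + (1 / (2 * (real CARD('n) - p))) * (W b * (gi ** Q) $ a $ c + W c * (gi ** Q) $ a $ b)
   + (1/2) * (\<Sum>d\<in>UNIV. R $ a $ d * M d b c)"
proof -
  have "(\<Sum>q\<in>UNIV. ((gi ** P) $ a $ q - (gi ** Q) $ a $ q) * (\<Sum>d\<in>UNIV. gi $ q $ d * M d b c))
      = (\<Sum>q\<in>UNIV. (gi ** P - gi ** Q) $ a $ q * (\<Sum>d\<in>UNIV. gi $ q $ d * M d b c))" by simp
  also have "\<dots> = (\<Sum>d\<in>UNIV. R $ a $ d * M d b c)"
    unfolding sum_mm3 R_def by (simp add: mm_diff_r)
  finally show ?thesis unfolding L_def p1_def q1_def by simp
qed

lemma GM: "transpose (S::real^'n^'n) = S \<Longrightarrow>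
  (\<Sum>a\<in>UNIV. \<Sum>e\<in>UNIV. S $ a $ e * M e a d) = trace (S ** N d)"
proof -
  assume S: "transpose S = S"
  have 1: "(\<Sum>a\<in>UNIV. \<Sum>e\<in>UNIV. S $ a $ e * N a $ e $ d) = (\<Sum>a\<in>UNIV. \<Sum>e\<in>UNIV. S $ a $ e * N e $ a $ d)"
    by (subst sum.swap) (simp add: sym_entry[OF S])
  have 2: "(\<Sum>a\<in>UNIV. \<Sum>e\<in>UNIV. S $ a $ e * N d $ e $ a) = trace (S ** N d)"
    by (simp add: trace_def mm_entry)
  show ?thesis unfolding M_def using 1 2
    by (simp add: ring_distribs sum.distrib sum_subtractf)
qed

lemma trace_R: "trace (R ** N d) = 0"
  unfolding R_def by (simp add: mm_diff_r trace_sub trace_P2N trace_Q2N)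

lemma tp: "(\<Sum>a\<in>UNIV. (gi ** P) $ a $ a) = p"
  using rank by (simp add: trace_def)
lemma tq: "(\<Sum>a\<in>UNIV. (gi ** Q) $ a $ a) = real CARD('n) - p"
proof -
  have "trace (gi ** Q) = trace (mat 1 :: real^'n^'n) - trace (gi ** P)"
    unfolding q1_eq by (simp add: trace_sub)
  thus ?thesis using rank by (simp add: trace_def[symmetric] trace_I)
qed

lemma LA: "(\<Sum>a\<in>UNIV. L a a d) = (E d + W d) / 2"
proof -
  have 1: "(\<Sum>a\<in>UNIV. E a * (gi ** P) $ a $ d) = 0" using E_p1[of d] by (simp add: vm_def)
  have 2: "(\<Sum>a\<in>UNIV. W a * (gi ** Q) $ a $ d) = 0" using W_q1[of d] by (simp add: vm_def)
  have 3: "(\<Sum>a\<in>UNIV. \<Sum>e\<in>UNIV. R $ a $ e * M e a d) = 0"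
    using GM[OF R_sym, of d] trace_R by simp
  have "(\<Sum>a\<in>UNIV. L a a d) = (1 / (2 * p)) * ((\<Sum>a\<in>UNIV. E a * (gi ** P) $ a $ d) + E d * (\<Sum>a\<in>UNIV. (gi ** P) $ a $ a))
     + (1 / (2 * (real CARD('n) - p))) * ((\<Sum>a\<in>UNIV. W a * (gi ** Q) $ a $ d) + W d * (\<Sum>a\<in>UNIV. (gi ** Q) $ a $ a))
     + (1/2) * (\<Sum>a\<in>UNIV. \<Sum>e\<in>UNIV. R $ a $ e * M e a d)"
    unfolding L_alt by (simp add: sum.distrib sum_distrib_left ring_distribs)
  also have "\<dots> = E d / 2 + W d / 2"
    unfolding 1 2 3 tp tq using ppos qpos by (simp add: field_simps)
  finally show ?thesis by simp
qed

lemma E_P2': "(\<Sum>a\<in>UNIV. E a * (gi ** P ** gi) $ a $ d) = 0" using E_P2[of d] by (simp add: vm_def)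
lemma E_P2'': "(\<Sum>a\<in>UNIV. E a * (gi ** P ** gi) $ d $ a) = 0"
  using E_P2'[of d] by (simp add: sym_entry[OF P2_sym])

lemma q1P2: "gi ** Q ** (gi ** P ** gi) = 0"
  by (simp add: matrix_mul_assoc QgiPext)

lemma mm_sym_contr: "transpose (Y::real^'n^'n) = Y \<Longrightarrow> (\<Sum>d\<in>UNIV. X $ b $ d * Y $ a $ d) = (X ** Y) $ b $ a"
  by (simp add: mm_entry sym_entry[of Y])

lemma trace_contr: "(\<Sum>a\<in>UNIV. \<Sum>d\<in>UNIV. X $ d $ a * Y $ a $ d) = trace ((Y::real^'n^'n) ** X)"
  by (simp add: trace_def mm_entry mult.commute)

lemma LB: "(\<Sum>a\<in>UNIV. \<Sum>d\<in>UNIV. L b a d * (gi ** P ** gi) $ a $ d) = - vm E gi b / 2"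
proof -
  let ?P2 = "gi ** P ** gi"
  have A1: "(\<Sum>a\<in>UNIV. \<Sum>d\<in>UNIV. E a * (gi ** P) $ b $ d * ?P2 $ a $ d) = 0"
  proof -
    have "(\<Sum>a\<in>UNIV. \<Sum>d\<in>UNIV. E a * (gi ** P) $ b $ d * ?P2 $ a $ d)
       = (\<Sum>d\<in>UNIV. (gi ** P) $ b $ d * (\<Sum>a\<in>UNIV. E a * ?P2 $ a $ d))"
      by (subst sum.swap) (simp add: sum_distrib_left mult_ac)
    thus ?thesis by (simp add: E_P2')
  qed
  have A2: "(\<Sum>a\<in>UNIV. \<Sum>d\<in>UNIV. E d * (gi ** P) $ b $ a * ?P2 $ a $ d) = 0"
  proof -
    have "(\<Sum>a\<in>UNIV. \<Sum>d\<in>UNIV. E d * (gi ** P) $ b $ a * ?P2 $ a $ d)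
       = (\<Sum>a\<in>UNIV. (gi ** P) $ b $ a * (\<Sum>d\<in>UNIV. E d * ?P2 $ a $ d))"
      by (simp add: sum_distrib_left mult_ac)
    thus ?thesis by (simp add: E_P2'')
  qed
  have B1: "(\<Sum>a\<in>UNIV. \<Sum>d\<in>UNIV. W a * (gi ** Q) $ b $ d * ?P2 $ a $ d) = 0"
  proof -
    have "(\<Sum>a\<in>UNIV. \<Sum>d\<in>UNIV. W a * (gi ** Q) $ b $ d * ?P2 $ a $ d)
       = (\<Sum>a\<in>UNIV. W a * (\<Sum>d\<in>UNIV. (gi ** Q) $ b $ d * ?P2 $ a $ d))"
      by (simp add: sum_distrib_left mult_ac)
    also have "\<dots> = (\<Sum>a\<in>UNIV. W a * (gi ** Q ** ?P2) $ b $ a)"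
      by (simp only: mm_sym_contr[OF P2_sym])
    finally have "(\<Sum>a\<in>UNIV. \<Sum>d\<in>UNIV. W a * (gi ** Q) $ b $ d * ?P2 $ a $ d)
       = (\<Sum>a\<in>UNIV. W a * (gi ** Q ** ?P2) $ b $ a)" .
    thus ?thesis by (simp add: q1P2)
  qed
  have B2: "(\<Sum>a\<in>UNIV. \<Sum>d\<in>UNIV. W d * (gi ** Q) $ b $ a * ?P2 $ a $ d) = 0"
  proof -
    have "(\<Sum>a\<in>UNIV. \<Sum>d\<in>UNIV. W d * (gi ** Q) $ b $ a * ?P2 $ a $ d)
       = (\<Sum>d\<in>UNIV. \<Sum>a\<in>UNIV. W d * ((gi ** Q) $ b $ a * ?P2 $ a $ d))"
      by (subst sum.swap) (simp add: mult_ac)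
    also have "\<dots> = (\<Sum>d\<in>UNIV. W d * (\<Sum>a\<in>UNIV. (gi ** Q) $ b $ a * ?P2 $ a $ d))"
      by (simp add: sum_distrib_left)
    also have "\<dots> = (\<Sum>d\<in>UNIV. W d * (gi ** Q ** ?P2) $ b $ d)"
      by (simp only: mm_entry[of "gi ** Q" "?P2", symmetric])
    finally have "(\<Sum>a\<in>UNIV. \<Sum>d\<in>UNIV. W d * (gi ** Q) $ b $ a * ?P2 $ a $ d)
       = (\<Sum>d\<in>UNIV. W d * (gi ** Q ** ?P2) $ b $ d)" .
    thus ?thesis by (simp add: q1P2)
  qed
  have C: "(\<Sum>a\<in>UNIV. \<Sum>d\<in>UNIV. (\<Sum>e\<in>UNIV. R $ b $ e * M e a d) * ?P2 $ a $ d) = - vm E gi b"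
  proof -
    have "(\<Sum>a\<in>UNIV. \<Sum>d\<in>UNIV. (\<Sum>e\<in>UNIV. R $ b $ e * M e a d) * ?P2 $ a $ d)
        = (\<Sum>e\<in>UNIV. R $ b $ e * (\<Sum>a\<in>UNIV. \<Sum>d\<in>UNIV. M e a d * ?P2 $ a $ d))"
      (is "?L = _")
    proof -
      have "?L = (\<Sum>a\<in>UNIV. \<Sum>d\<in>UNIV. \<Sum>e\<in>UNIV. R $ b $ e * (M e a d * ?P2 $ a $ d))"
        by (simp add: sum_distrib_right sum_distrib_left mult_ac)
      also have "\<dots> = (\<Sum>a\<in>UNIV. \<Sum>e\<in>UNIV. \<Sum>d\<in>UNIV. R $ b $ e * (M e a d * ?P2 $ a $ d))"
        by (rule sum.cong[OF refl]) (rule sum.swap)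
      also have "\<dots> = (\<Sum>e\<in>UNIV. \<Sum>a\<in>UNIV. \<Sum>d\<in>UNIV. R $ b $ e * (M e a d * ?P2 $ a $ d))"
        by (rule sum.swap)
      finally show ?thesis by (simp add: sum_distrib_left)
    qed
    also have "\<dots> = vm E R b"
      unfolding vm_def E_def P2_def by (simp add: sym_entry[OF R_sym] mult.commute)
    also have "\<dots> = vm E ?P2 b - vm E (gi ** Q ** gi) b"
      unfolding R_def by (simp add: vm_diff)
    also have "\<dots> = - vm E gi b" by (simp add: E_P2 E_Q2)
    finally show ?thesis .
  qed
  have "(\<Sum>a\<in>UNIV. \<Sum>d\<in>UNIV. L b a d * ?P2 $ a $ d)
     = (1 / (2 * p)) * ((\<Sum>a\<in>UNIV. \<Sum>d\<in>UNIV. E a * (gi ** P) $ b $ d * ?P2 $ a $ d)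
                       + (\<Sum>a\<in>UNIV. \<Sum>d\<in>UNIV. E d * (gi ** P) $ b $ a * ?P2 $ a $ d))
     + (1 / (2 * (real CARD('n) - p))) * ((\<Sum>a\<in>UNIV. \<Sum>d\<in>UNIV. W a * (gi ** Q) $ b $ d * ?P2 $ a $ d)
                       + (\<Sum>a\<in>UNIV. \<Sum>d\<in>UNIV. W d * (gi ** Q) $ b $ a * ?P2 $ a $ d))
     + (1/2) * (\<Sum>a\<in>UNIV. \<Sum>d\<in>UNIV. (\<Sum>e\<in>UNIV. R $ b $ e * M e a d) * ?P2 $ a $ d)"
    unfolding L_alt by (simp add: sum.distrib sum_distrib_left sum_distrib_right sum_divide_distrib ring_distribs)
  also have "\<dots> = - vm E gi b / 2"
    unfolding A1 A2 B1 B2 C by simp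
  finally show ?thesis .
qed

lemma LC: "(\<Sum>a\<in>UNIV. \<Sum>d\<in>UNIV. L d a b * (gi ** P) $ a $ d) = E b / 2"
proof -
  let ?p1 = "gi ** P"
  have A1: "(\<Sum>a\<in>UNIV. \<Sum>d\<in>UNIV. E a * ?p1 $ d $ b * ?p1 $ a $ d) = 0"
  proof -
    have "(\<Sum>a\<in>UNIV. \<Sum>d\<in>UNIV. E a * ?p1 $ d $ b * ?p1 $ a $ d) = vm E (?p1 ** ?p1) b"
      by (simp add: vm_def mm_entry sum_distrib_left mult_ac)
    thus ?thesis by (simp add: matrix_mul_assoc Pext E_p1)
  qed
  have A2: "(\<Sum>a\<in>UNIV. \<Sum>d\<in>UNIV. E b * ?p1 $ d $ a * ?p1 $ a $ d) = E b * p"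
  proof -
    have "(\<Sum>a\<in>UNIV. \<Sum>d\<in>UNIV. E b * ?p1 $ d $ a * ?p1 $ a $ d) = E b * (\<Sum>a\<in>UNIV. \<Sum>d\<in>UNIV. ?p1 $ d $ a * ?p1 $ a $ d)"
      by (simp add: sum_distrib_left mult_ac)
    also have "\<dots> = E b * trace (?p1 ** ?p1)" by (simp only: trace_contr)
    finally have "(\<Sum>a\<in>UNIV. \<Sum>d\<in>UNIV. E b * ?p1 $ d $ a * ?p1 $ a $ d) = E b * trace (?p1 ** ?p1)" .
    thus ?thesis by (simp add: matrix_mul_assoc Pext rank)
  qed
  have B1: "(\<Sum>a\<in>UNIV. \<Sum>d\<in>UNIV. W a * (gi ** Q) $ d $ b * ?p1 $ a $ d) = 0"
  proof -
    have "(\<Sum>a\<in>UNIV. \<Sum>d\<in>UNIV. W a * (gi ** Q) $ d $ b * ?p1 $ a $ d) = vm W (?p1 ** (gi ** Q)) b"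
      by (simp add: vm_def mm_entry sum_distrib_left mult_ac)
    thus ?thesis by (simp add: matrix_mul_assoc orthext vm_zero)
  qed
  have B2: "(\<Sum>a\<in>UNIV. \<Sum>d\<in>UNIV. W b * (gi ** Q) $ d $ a * ?p1 $ a $ d) = 0"
  proof -
    have "(\<Sum>a\<in>UNIV. \<Sum>d\<in>UNIV. W b * (gi ** Q) $ d $ a * ?p1 $ a $ d) = W b * (\<Sum>a\<in>UNIV. \<Sum>d\<in>UNIV. (gi ** Q) $ d $ a * ?p1 $ a $ d)"
      by (simp add: sum_distrib_left mult_ac)
    also have "\<dots> = W b * trace (?p1 ** (gi ** Q))" by (simp only: trace_contr)
    finally have "(\<Sum>a\<in>UNIV. \<Sum>d\<in>UNIV. W b * (gi ** Q) $ d $ a * ?p1 $ a $ d) = W b * trace (?p1 ** (gi ** Q))" .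
    thus ?thesis by (simp add: matrix_mul_assoc orthext trace_def)
  qed
  have C: "(\<Sum>a\<in>UNIV. \<Sum>d\<in>UNIV. (\<Sum>e\<in>UNIV. R $ d $ e * M e a b) * ?p1 $ a $ d) = 0"
  proof -
    have "(\<Sum>a\<in>UNIV. \<Sum>d\<in>UNIV. (\<Sum>e\<in>UNIV. R $ d $ e * M e a b) * ?p1 $ a $ d)
        = (\<Sum>a\<in>UNIV. \<Sum>e\<in>UNIV. (?p1 ** R) $ a $ e * M e a b)"
      (is "?L = _")
    proof (rule sum.cong[OF refl])
      fix a
      have "(\<Sum>d\<in>UNIV. (\<Sum>e\<in>UNIV. R $ d $ e * M e a b) * ?p1 $ a $ d)
          = (\<Sum>d\<in>UNIV. \<Sum>e\<in>UNIV. (?p1 $ a $ d * R $ d $ e) * M e a b)"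
        by (simp add: sum_distrib_right sum_distrib_left mult_ac)
      also have "\<dots> = (\<Sum>e\<in>UNIV. \<Sum>d\<in>UNIV. (?p1 $ a $ d * R $ d $ e) * M e a b)"
        by (rule sum.swap)
      also have "\<dots> = (\<Sum>e\<in>UNIV. (\<Sum>d\<in>UNIV. ?p1 $ a $ d * R $ d $ e) * M e a b)"
        by (simp add: sum_distrib_right)
      also have "\<dots> = (\<Sum>e\<in>UNIV. (?p1 ** R) $ a $ e * M e a b)"
        by (simp only: mm_entry[of "?p1" R, symmetric])
      finally show "(\<Sum>d\<in>UNIV. (\<Sum>e\<in>UNIV. R $ d $ e * M e a b) * ?p1 $ a $ d)
          = (\<Sum>e\<in>UNIV. (?p1 ** R) $ a $ e * M e a b)" .
    qed
    also have "?p1 ** R = gi ** P ** gi"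
      unfolding R_def by (simp add: mx Pext orthext)
    also have "(\<Sum>a\<in>UNIV. \<Sum>e\<in>UNIV. (gi ** P ** gi) $ a $ e * M e a b) = 0"
      using GM[OF P2_sym, of b] trace_P2N by simp
    finally show ?thesis .
  qed
  have "(\<Sum>a\<in>UNIV. \<Sum>d\<in>UNIV. L d a b * ?p1 $ a $ d)
     = (1 / (2 * p)) * ((\<Sum>a\<in>UNIV. \<Sum>d\<in>UNIV. E a * ?p1 $ d $ b * ?p1 $ a $ d)
                       + (\<Sum>a\<in>UNIV. \<Sum>d\<in>UNIV. E b * ?p1 $ d $ a * ?p1 $ a $ d))
     + (1 / (2 * (real CARD('n) - p))) * ((\<Sum>a\<in>UNIV. \<Sum>d\<in>UNIV. W a * (gi ** Q) $ d $ b * ?p1 $ a $ d)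
                       + (\<Sum>a\<in>UNIV. \<Sum>d\<in>UNIV. W b * (gi ** Q) $ d $ a * ?p1 $ a $ d))
     + (1/2) * (\<Sum>a\<in>UNIV. \<Sum>d\<in>UNIV. (\<Sum>e\<in>UNIV. R $ d $ e * M e a b) * ?p1 $ a $ d)"
    unfolding L_alt by (simp add: sum.distrib sum_distrib_left sum_distrib_right sum_divide_distrib ring_distribs)
  also have "\<dots> = E b / 2"
    unfolding A1 A2 B1 B2 C using ppos by (simp add: field_simps)
  finally show ?thesis .
qed

end

context bc begin

lemma mmc: "(\<Sum>k\<in>UNIV. X $ i $ k * Y $ k $ j) = ((X::real^'n^'n) ** Y) $ i $ j"
  by (simp add: mm_entry)

lemma LC': "(\<Sum>a\<in>UNIV. \<Sum>d\<in>UNIV. L d b a * (gi ** P) $ a $ d) = E b / 2"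
  using LC[of b] by (simp add: Lsym[of _ b])

lemma Tv_div: "(\<Sum>a\<in>UNIV. (gi ** N a) $ a $ l) = Tv gi l"
  unfolding Tv_def mm_entry
  by (intro sum.cong refl) (simp add: sym_entry[OF gi_sym] N_entry_sym[of _ l] mult.commute)

lemma K4: "(\<Sum>a\<in>UNIV. (gi ** N a ** gi) $ a $ b) = vm E gi b / 2 - vm W gi b / 2"
proof -
  have "(\<Sum>a\<in>UNIV. (gi ** N a ** gi) $ a $ b) = (\<Sum>a\<in>UNIV. \<Sum>l\<in>UNIV. (gi ** N a) $ a $ l * gi $ l $ b)"
    by (simp only: mm_entry[of "gi ** N _" gi])
  also have "\<dots> = (\<Sum>l\<in>UNIV. (\<Sum>a\<in>UNIV. (gi ** N a) $ a $ l) * gi $ l $ b)"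
    by (subst sum.swap) (simp add: sum_distrib_right)
  also have "\<dots> = (\<Sum>l\<in>UNIV. (E l / 2 - W l / 2) * gi $ l $ b)"
    by (simp only: Tv_div Tv_gi)
  also have "\<dots> = vm E gi b / 2 - vm W gi b / 2"
    by (simp add: vm_def left_diff_distrib sum_subtractf sum_divide_distrib)
  finally show ?thesis .
qed

lemma C1: "(\<Sum>a\<in>UNIV. (gi ** N a ** gi) $ a $ b + (\<Sum>d\<in>UNIV. L a a d * (gi ** P ** gi) $ d $ b)
     + (\<Sum>d\<in>UNIV. L b a d * (gi ** P ** gi) $ a $ d)) = 0"
proof -
  have 2: "(\<Sum>a\<in>UNIV. \<Sum>d\<in>UNIV. L a a d * (gi ** P ** gi) $ d $ b) = vm W gi b / 2"
  proof -
    have "(\<Sum>a\<in>UNIV. \<Sum>d\<in>UNIV. L a a d * (gi ** P ** gi) $ d $ b)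
        = (\<Sum>d\<in>UNIV. (\<Sum>a\<in>UNIV. L a a d) * (gi ** P ** gi) $ d $ b)"
      by (subst sum.swap) (simp add: sum_distrib_right)
    also have "\<dots> = (\<Sum>d\<in>UNIV. (E d + W d) / 2 * (gi ** P ** gi) $ d $ b)"
      by (simp only: LA)
    also have "\<dots> = vm E (gi ** P ** gi) b / 2 + vm W (gi ** P ** gi) b / 2"
      by (simp add: vm_def ring_distribs add_divide_distrib sum.distrib sum_divide_distrib)
    finally show ?thesis by (simp add: E_P2 W_P2)
  qed
  show ?thesis
    by (simp add: sum.distrib K4 2 LB)
qed

lemma C3: "(\<Sum>a\<in>UNIV. (gi ** N a) $ a $ b + (\<Sum>d\<in>UNIV. L a a d * (gi ** P) $ d $ b)
     - (\<Sum>d\<in>UNIV. L d a b * (gi ** P) $ a $ d)) = 0"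
proof -
  have 2: "(\<Sum>a\<in>UNIV. \<Sum>d\<in>UNIV. L a a d * (gi ** P) $ d $ b) = W b / 2"
  proof -
    have "(\<Sum>a\<in>UNIV. \<Sum>d\<in>UNIV. L a a d * (gi ** P) $ d $ b)
        = (\<Sum>d\<in>UNIV. (\<Sum>a\<in>UNIV. L a a d) * (gi ** P) $ d $ b)"
      by (subst sum.swap) (simp add: sum_distrib_right)
    also have "\<dots> = (\<Sum>d\<in>UNIV. (E d + W d) / 2 * (gi ** P) $ d $ b)"
      by (simp only: LA)
    also have "\<dots> = vm E (gi ** P) b / 2 + vm W (gi ** P) b / 2"
      by (simp add: vm_def ring_distribs add_divide_distrib sum.distrib sum_divide_distrib)
    finally show ?thesis by (simp add: E_p1 W_p1)
  qed
  show ?thesis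
    by (simp add: sum.distrib sum_subtractf Tv_div Tv_gi 2 LC)
qed

lemma P2P: "gi ** P ** gi ** P = gi ** P" by (simp add: Pext)
lemma PP2: "P ** (gi ** P ** gi) = P ** gi" by (simp add: matrix_mul_assoc Pproj)
lemma p1_tr: "(gi ** P) $ a $ b = (P ** gi) $ b $ a"
proof -
  have "transpose (gi ** P) = P ** gi" by (simp add: matrix_transpose_mul gi_sym P_sym)
  thus ?thesis by (metis tr_entry)
qed

lemma C5: "(\<Sum>b\<in>UNIV. \<Sum>c\<in>UNIV. (gi ** P ** gi) $ b $ c * (N a $ b $ c
      - (\<Sum>d\<in>UNIV. L d a b * P $ d $ c) - (\<Sum>d\<in>UNIV. L d a c * P $ b $ d))) = - E a"
proof -
  let ?P2 = "gi ** P ** gi"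
  have 1: "(\<Sum>b\<in>UNIV. \<Sum>c\<in>UNIV. ?P2 $ b $ c * N a $ b $ c) = 0"
    using contr_tr[OF N_sym[of a], of ?P2] trace_P2N[of a] by simp
  have 2: "(\<Sum>b\<in>UNIV. \<Sum>c\<in>UNIV. ?P2 $ b $ c * (\<Sum>d\<in>UNIV. L d a b * P $ d $ c)) = E a / 2"
  proof -
    have "(\<Sum>b\<in>UNIV. \<Sum>c\<in>UNIV. ?P2 $ b $ c * (\<Sum>d\<in>UNIV. L d a b * P $ d $ c))
        = (\<Sum>b\<in>UNIV. \<Sum>d\<in>UNIV. L d a b * (\<Sum>c\<in>UNIV. ?P2 $ b $ c * P $ d $ c))"
      apply (rule sum.cong[OF refl])
      apply (simp add: sum_distrib_left sum_distrib_right)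
      apply (subst sum.swap)
      by (simp add: mult_ac)
    also have "\<dots> = (\<Sum>b\<in>UNIV. \<Sum>d\<in>UNIV. L d b a * (gi ** P) $ b $ d)"
      by (simp only: mm_sym_contr[OF P_sym] P2P Lsym[of _ a])
    finally show ?thesis using LC[of a] by simp
  qed
  have 3: "(\<Sum>b\<in>UNIV. \<Sum>c\<in>UNIV. ?P2 $ b $ c * (\<Sum>d\<in>UNIV. L d a c * P $ b $ d)) = E a / 2"
  proof -
    have "(\<Sum>b\<in>UNIV. \<Sum>c\<in>UNIV. ?P2 $ b $ c * (\<Sum>d\<in>UNIV. L d a c * P $ b $ d))
        = (\<Sum>c\<in>UNIV. \<Sum>b\<in>UNIV. \<Sum>d\<in>UNIV. L d a c * (P $ b $ d * ?P2 $ b $ c))"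
      apply (subst sum.swap)
      apply (rule sum.cong[OF refl])
      apply (simp add: sum_distrib_left sum_distrib_right)
      by (simp add: mult_ac)
    also have "\<dots> = (\<Sum>c\<in>UNIV. \<Sum>d\<in>UNIV. L d a c * (\<Sum>b\<in>UNIV. P $ d $ b * ?P2 $ b $ c))"
      apply (rule sum.cong[OF refl])
      apply (subst sum.swap)
      by (simp add: sum_distrib_left sym_entry[OF P_sym, of _ ])
    also have "\<dots> = (\<Sum>c\<in>UNIV. \<Sum>d\<in>UNIV. L d c a * (gi ** P) $ c $ d)"
      by (simp only: mmc PP2 p1_tr[symmetric] Lsym[of _ a])
    finally show ?thesis using LC[of a] by simp
  qed
  show ?thesis
    using 1 2 3 by (simp add: right_diff_distrib sum_subtractf)
qed

lemma gNg_sym: "transpose (gi ** N a ** gi) = gi ** N a ** gi"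
  by (simp add: matrix_transpose_mul gi_sym N_sym matrix_mul_assoc)

lemma symsym_contr: "transpose X = X \<Longrightarrow> transpose Y = Y \<Longrightarrow> (\<Sum>r\<in>UNIV. X $ d $ r * Y $ r $ b) = ((Y::real^'n^'n) ** X) $ b $ d"
  by (simp add: mm_entry sym_entry[of X] sym_entry[of Y] mult.commute)

lemma C6: "(\<Sum>b\<in>UNIV. \<Sum>c\<in>UNIV. P $ b $ c * ((gi ** N a ** gi) $ b $ c
      + (\<Sum>d\<in>UNIV. L b a d * (gi ** P ** gi) $ d $ c) + (\<Sum>d\<in>UNIV. L c a d * (gi ** P ** gi) $ b $ d))) = E a"
proof -
  let ?P2 = "gi ** P ** gi"
  have 1: "(\<Sum>b\<in>UNIV. \<Sum>c\<in>UNIV. P $ b $ c * (gi ** N a ** gi) $ b $ c) = 0"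
  proof -
    have "(\<Sum>b\<in>UNIV. \<Sum>c\<in>UNIV. P $ b $ c * (gi ** N a ** gi) $ b $ c) = trace (P ** (gi ** N a ** gi))"
      by (rule contr_tr[OF gNg_sym])
    also have "\<dots> = trace ((gi ** N a ** gi) ** P)" by (rule trace_mul_sym)
    also have "\<dots> = trace ((gi ** N a) ** (gi ** P))" by (simp add: matrix_mul_assoc)
    also have "\<dots> = trace (gi ** P ** (gi ** N a))" by (simp add: trace_mul_sym[of "gi ** N a"])
    finally show ?thesis by (simp add: matrix_mul_assoc trace_P2N)
  qed
  have LCb: "(\<Sum>b\<in>UNIV. \<Sum>d\<in>UNIV. L b a d * (gi ** P) $ d $ b) = E a / 2"
  proof -
    have "(\<Sum>b\<in>UNIV. \<Sum>d\<in>UNIV. L b a d * (gi ** P) $ d $ b) = (\<Sum>d\<in>UNIV. \<Sum>b\<in>UNIV. L b d a * (gi ** P) $ d $ b)"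
      by (subst sum.swap) (simp add: Lsym[of _ a])
    thus ?thesis using LC[of a] by simp
  qed
  have 2: "(\<Sum>b\<in>UNIV. \<Sum>c\<in>UNIV. P $ b $ c * (\<Sum>d\<in>UNIV. L b a d * ?P2 $ d $ c)) = E a / 2"
  proof -
    have "(\<Sum>b\<in>UNIV. \<Sum>c\<in>UNIV. P $ b $ c * (\<Sum>d\<in>UNIV. L b a d * ?P2 $ d $ c))
        = (\<Sum>b\<in>UNIV. \<Sum>d\<in>UNIV. L b a d * (\<Sum>c\<in>UNIV. P $ b $ c * ?P2 $ d $ c))"
      apply (rule sum.cong[OF refl])
      apply (simp add: sum_distrib_left sum_distrib_right)
      apply (subst sum.swap)
      by (simp add: mult_ac)
    also have "\<dots> = (\<Sum>b\<in>UNIV. \<Sum>d\<in>UNIV. L b a d * (gi ** P) $ d $ b)"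
      by (simp only: mm_sym_contr[OF P2_sym] PP2 p1_tr[symmetric])
    finally show ?thesis using LCb by simp
  qed
  have 3: "(\<Sum>b\<in>UNIV. \<Sum>c\<in>UNIV. P $ b $ c * (\<Sum>d\<in>UNIV. L c a d * ?P2 $ b $ d)) = E a / 2"
  proof -
    have "(\<Sum>b\<in>UNIV. \<Sum>c\<in>UNIV. P $ b $ c * (\<Sum>d\<in>UNIV. L c a d * ?P2 $ b $ d))
        = (\<Sum>c\<in>UNIV. \<Sum>b\<in>UNIV. \<Sum>d\<in>UNIV. L c a d * (P $ c $ b * ?P2 $ b $ d))"
      apply (subst sum.swap)
      apply (rule sum.cong[OF refl])
      apply (simp add: sum_distrib_left sum_distrib_right sym_entry[OF P_sym, of _ ])
      by (simp add: mult_ac)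
    also have "\<dots> = (\<Sum>c\<in>UNIV. \<Sum>d\<in>UNIV. L c a d * (\<Sum>b\<in>UNIV. P $ c $ b * ?P2 $ b $ d))"
      apply (rule sum.cong[OF refl])
      apply (subst sum.swap)
      by (simp add: sum_distrib_left)
    also have "\<dots> = (\<Sum>c\<in>UNIV. \<Sum>d\<in>UNIV. L c a d * (gi ** P) $ d $ c)"
      by (simp only: mmc PP2 p1_tr[symmetric])
    finally show ?thesis using LCb by simp
  qed
  show ?thesis
    using 1 2 3 by (simp add: distrib_left sum.distrib)
qed

lemma C9: "(\<Sum>d\<in>UNIV. \<Sum>r\<in>UNIV. (gi ** P) $ d $ r * (- (gi ** N b) $ r $ d
      + (\<Sum>e\<in>UNIV. L r b e * (gi ** Q) $ e $ d) - (\<Sum>e\<in>UNIV. L e b d * (gi ** Q) $ r $ e))) = 0"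
proof -
  have 1: "(\<Sum>d\<in>UNIV. \<Sum>r\<in>UNIV. (gi ** P) $ d $ r * (gi ** N b) $ r $ d) = 0"
  proof -
    have "(\<Sum>d\<in>UNIV. \<Sum>r\<in>UNIV. (gi ** P) $ d $ r * (gi ** N b) $ r $ d) = trace ((gi ** N b) ** (gi ** P))"
      by (subst sum.swap) (simp only: trace_contr)
    also have "\<dots> = trace ((gi ** P) ** (gi ** N b))" by (rule trace_mul_sym)
    finally show ?thesis by (simp add: matrix_mul_assoc trace_P2N)
  qed
  have 2: "(\<Sum>d\<in>UNIV. \<Sum>r\<in>UNIV. (gi ** P) $ d $ r * (\<Sum>e\<in>UNIV. L r b e * (gi ** Q) $ e $ d)) = 0"
  proof -
    have "(\<Sum>d\<in>UNIV. \<Sum>r\<in>UNIV. (gi ** P) $ d $ r * (\<Sum>e\<in>UNIV. L r b e * (gi ** Q) $ e $ d))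
       = (\<Sum>d\<in>UNIV. \<Sum>r\<in>UNIV. \<Sum>e\<in>UNIV. L r b e * ((gi ** Q) $ e $ d * (gi ** P) $ d $ r))"
      by (simp add: sum_distrib_left mult_ac)
    also have "\<dots> = (\<Sum>r\<in>UNIV. \<Sum>d\<in>UNIV. \<Sum>e\<in>UNIV. L r b e * ((gi ** Q) $ e $ d * (gi ** P) $ d $ r))"
      by (rule sum.swap)
    also have "\<dots> = (\<Sum>r\<in>UNIV. \<Sum>e\<in>UNIV. \<Sum>d\<in>UNIV. L r b e * ((gi ** Q) $ e $ d * (gi ** P) $ d $ r))"
      by (rule sum.cong[OF refl], rule sum.swap)
    also have "\<dots> = (\<Sum>r\<in>UNIV. \<Sum>e\<in>UNIV. L r b e * (gi ** Q ** (gi ** P)) $ e $ r)"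
      by (simp only: sum_distrib_left[symmetric] mmc)
    finally show ?thesis by (simp add: matrix_mul_assoc QgiPext)
  qed
  have 3: "(\<Sum>d\<in>UNIV. \<Sum>r\<in>UNIV. (gi ** P) $ d $ r * (\<Sum>e\<in>UNIV. L e b d * (gi ** Q) $ r $ e)) = 0"
  proof -
    have "(\<Sum>d\<in>UNIV. \<Sum>r\<in>UNIV. (gi ** P) $ d $ r * (\<Sum>e\<in>UNIV. L e b d * (gi ** Q) $ r $ e))
       = (\<Sum>d\<in>UNIV. \<Sum>r\<in>UNIV. \<Sum>e\<in>UNIV. L e b d * ((gi ** P) $ d $ r * (gi ** Q) $ r $ e))"
      by (simp add: sum_distrib_left mult_ac)
    also have "\<dots> = (\<Sum>d\<in>UNIV. \<Sum>e\<in>UNIV. \<Sum>r\<in>UNIV. L e b d * ((gi ** P) $ d $ r * (gi ** Q) $ r $ e))"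
      by (rule sum.cong[OF refl]) (rule sum.swap)
    also have "\<dots> = (\<Sum>d\<in>UNIV. \<Sum>e\<in>UNIV. L e b d * (gi ** P ** (gi ** Q)) $ d $ e)"
      by (simp only: sum_distrib_left[symmetric] mmc)
    finally show ?thesis by (simp add: matrix_mul_assoc orthext)
  qed
  show ?thesis
    using 1 2 3 by (simp add: distrib_left right_diff_distrib sum.distrib sum_subtractf sum_negf)
qed

lemma C11: "(\<Sum>d\<in>UNIV. \<Sum>r\<in>UNIV. (gi ** P ** gi) $ d $ r * (N d $ r $ b
      - (\<Sum>e\<in>UNIV. L e d r * P $ e $ b) - (\<Sum>e\<in>UNIV. L e d b * P $ r $ e))) = 0"
proof -
  let ?P2 = "gi ** P ** gi"
  have 1: "(\<Sum>d\<in>UNIV. \<Sum>r\<in>UNIV. ?P2 $ d $ r * N d $ r $ b) = E b / 2"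
  proof -
    have "(\<Sum>d\<in>UNIV. \<Sum>r\<in>UNIV. ?P2 $ d $ r * N d $ r $ b) = Tv ?P2 b"
      unfolding Tv_def
      by (rule sum.cong[OF refl]) (rule symsym_contr[OF P2_sym N_sym])
    thus ?thesis by (simp add: E_Tv)
  qed
  have 2: "(\<Sum>d\<in>UNIV. \<Sum>r\<in>UNIV. ?P2 $ d $ r * (\<Sum>e\<in>UNIV. L e d r * P $ e $ b)) = 0"
  proof -
    have "(\<Sum>d\<in>UNIV. \<Sum>r\<in>UNIV. ?P2 $ d $ r * (\<Sum>e\<in>UNIV. L e d r * P $ e $ b))
       = (\<Sum>d\<in>UNIV. \<Sum>r\<in>UNIV. \<Sum>e\<in>UNIV. P $ e $ b * (L e d r * ?P2 $ d $ r))"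
      by (simp add: sum_distrib_left mult_ac)
    also have "\<dots> = (\<Sum>d\<in>UNIV. \<Sum>e\<in>UNIV. \<Sum>r\<in>UNIV. P $ e $ b * (L e d r * ?P2 $ d $ r))"
      by (rule sum.cong[OF refl], rule sum.swap)
    also have "\<dots> = (\<Sum>e\<in>UNIV. \<Sum>d\<in>UNIV. \<Sum>r\<in>UNIV. P $ e $ b * (L e d r * ?P2 $ d $ r))"
      by (rule sum.swap)
    also have "\<dots> = (\<Sum>e\<in>UNIV. (\<Sum>d\<in>UNIV. \<Sum>r\<in>UNIV. L e d r * ?P2 $ d $ r) * P $ e $ b)"
      by (simp add: sum_distrib_left sum_distrib_right mult_ac)
    also have "\<dots> = (\<Sum>e\<in>UNIV. (- vm E gi e / 2) * P $ e $ b)"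
      by (simp only: LB)
    also have "\<dots> = - vm (vm E gi) P b / 2"
      by (simp add: vm_def sum_negf sum_divide_distrib[symmetric] sum_distrib_right[symmetric])
    also have "vm (vm E gi) P b = vm E (gi ** P) b"
      by (simp add: vm_mm) (simp add: vm_def)
    finally show ?thesis by (simp add: E_p1)
  qed
  have 3: "(\<Sum>d\<in>UNIV. \<Sum>r\<in>UNIV. ?P2 $ d $ r * (\<Sum>e\<in>UNIV. L e d b * P $ r $ e)) = E b / 2"
  proof -
    have "(\<Sum>d\<in>UNIV. \<Sum>r\<in>UNIV. ?P2 $ d $ r * (\<Sum>e\<in>UNIV. L e d b * P $ r $ e))
       = (\<Sum>d\<in>UNIV. \<Sum>r\<in>UNIV. \<Sum>e\<in>UNIV. L e d b * (?P2 $ d $ r * P $ r $ e))"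
      by (simp add: sum_distrib_left mult_ac)
    also have "\<dots> = (\<Sum>d\<in>UNIV. \<Sum>e\<in>UNIV. \<Sum>r\<in>UNIV. L e d b * (?P2 $ d $ r * P $ r $ e))"
      by (rule sum.cong[OF refl]) (rule sum.swap)
    also have "\<dots> = (\<Sum>d\<in>UNIV. \<Sum>e\<in>UNIV. L e d b * (gi ** P) $ d $ e)"
      by (simp only: sum_distrib_left[symmetric] mmc P2P)
    finally show ?thesis using LC[of b] by simp
  qed
  show ?thesis
    using 1 2 3 by (simp add: right_diff_distrib sum_subtractf)
qed

end

context bc begin

lemma transpose_uminus: "transpose (- (A::real^'n^'n)) = - transpose A"
  by (simp add: transpose_def vec_eq_iff)

lemma swap_bc: "bc g gi Q P (\<lambda>a. - N a) (real CARD('n) - p)"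
proof unfold_locales
  show "Q + P = g" using PQ by (simp add: add.commute)
  show "Q ** gi ** P = 0" by (rule QgiP)
  show "trace (gi ** Q) = real CARD('n) - p" using tq by (simp add: trace_def)
  show "real CARD('n) - p > 0" by (rule qpos)
  show "real CARD('n) - (real CARD('n) - p) > 0" using ppos by simp
  fix a
  show "transpose (- N a) = - N a" by (simp add: transpose_uminus N_sym)
  show "- N a = - N a ** gi ** Q + Q ** gi ** (- N a)"
  proof -
    have e: "- N a ** gi ** Q + Q ** gi ** (- N a) = - (N a ** gi ** Q + Q ** gi ** N a)"
      by (simp add: mm_neg_l mm_neg_r)
    show ?thesis by (subst e) (rule arg_cong[where f=uminus], rule Nrel2)
  qed
qed (auto simp: g_sym gi_sym gig ggi P_sym Q_sym Pproj Qproj orth)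

lemma Q_conclusions:
  "(\<Sum>a\<in>UNIV. (gi ** (- N a) ** gi) $ a $ b + (\<Sum>d\<in>UNIV. L a a d * (gi ** Q ** gi) $ d $ b)
     + (\<Sum>d\<in>UNIV. L b a d * (gi ** Q ** gi) $ a $ d)) = 0"
  "(\<Sum>a\<in>UNIV. (gi ** (- N a)) $ a $ b + (\<Sum>d\<in>UNIV. L a a d * (gi ** Q) $ d $ b)
     - (\<Sum>d\<in>UNIV. L d a b * (gi ** Q) $ a $ d)) = 0"
  "(\<Sum>b\<in>UNIV. \<Sum>c\<in>UNIV. (gi ** Q ** gi) $ b $ c * (- N a $ b $ c
      - (\<Sum>d\<in>UNIV. L d a b * Q $ d $ c) - (\<Sum>d\<in>UNIV. L d a c * Q $ b $ d))) = - W a"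
  "(\<Sum>b\<in>UNIV. \<Sum>c\<in>UNIV. Q $ b $ c * ((gi ** (- N a) ** gi) $ b $ c
      + (\<Sum>d\<in>UNIV. L b a d * (gi ** Q ** gi) $ d $ c) + (\<Sum>d\<in>UNIV. L c a d * (gi ** Q ** gi) $ b $ d))) = W a"
  "(\<Sum>d\<in>UNIV. \<Sum>r\<in>UNIV. (gi ** Q) $ d $ r * (- (gi ** (- N b)) $ r $ d
      + (\<Sum>e\<in>UNIV. L r b e * (gi ** P) $ e $ d) - (\<Sum>e\<in>UNIV. L e b d * (gi ** P) $ r $ e))) = 0"
  "(\<Sum>d\<in>UNIV. \<Sum>r\<in>UNIV. (gi ** Q ** gi) $ d $ r * (- N d $ r $ b
      - (\<Sum>e\<in>UNIV. L e d r * Q $ e $ b) - (\<Sum>e\<in>UNIV. L e d b * Q $ r $ e))) = 0"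
proof -
  interpret sw: bc g gi Q P "\<lambda>a. - N a" "real CARD('n) - p" by (rule swap_bc)
  have sM: "sw.M a b c = - M a b c" for a b c
    unfolding sw.M_def M_def by simp
  have sE: "sw.E a = W a" for a
    unfolding sw.E_def W_def sM sw.P2_def Q2_def by (simp add: sum_negf)
  have sW: "sw.W a = E a" for a
    unfolding sw.W_def E_def sM sw.Q2_def P2_def by (simp add: sum_negf)
  have sL: "sw.L a b c = L a b c" for a b c
  proof -
    have "(\<Sum>q\<in>UNIV. (sw.p1 $ a $ q - sw.q1 $ a $ q) * (\<Sum>d\<in>UNIV. gi $ q $ d * sw.M d b c))
        = (\<Sum>q\<in>UNIV. (p1 $ a $ q - q1 $ a $ q) * (\<Sum>d\<in>UNIV. gi $ q $ d * M d b c))"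
      unfolding sM sw.p1_def sw.q1_def p1_def q1_def
      by (rule sum.cong[OF refl]) (simp add: sum_negf algebra_simps)
    thus ?thesis
      unfolding sw.L_def L_def sE sW sw.p1_def sw.q1_def p1_def q1_def by (simp add: algebra_simps)
  qed
  show "(\<Sum>a\<in>UNIV. (gi ** (- N a) ** gi) $ a $ b + (\<Sum>d\<in>UNIV. L a a d * (gi ** Q ** gi) $ d $ b)
     + (\<Sum>d\<in>UNIV. L b a d * (gi ** Q ** gi) $ a $ d)) = 0"
    using sw.C1[of b] unfolding sL .
  show "(\<Sum>a\<in>UNIV. (gi ** (- N a)) $ a $ b + (\<Sum>d\<in>UNIV. L a a d * (gi ** Q) $ d $ b)
     - (\<Sum>d\<in>UNIV. L d a b * (gi ** Q) $ a $ d)) = 0"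
    using sw.C3[of b] unfolding sL .
  show "(\<Sum>b\<in>UNIV. \<Sum>c\<in>UNIV. (gi ** Q ** gi) $ b $ c * (- N a $ b $ c
      - (\<Sum>d\<in>UNIV. L d a b * Q $ d $ c) - (\<Sum>d\<in>UNIV. L d a c * Q $ b $ d))) = - W a"
    using sw.C5[of a] unfolding sL sE by simp
  show "(\<Sum>b\<in>UNIV. \<Sum>c\<in>UNIV. Q $ b $ c * ((gi ** (- N a) ** gi) $ b $ c
      + (\<Sum>d\<in>UNIV. L b a d * (gi ** Q ** gi) $ d $ c) + (\<Sum>d\<in>UNIV. L c a d * (gi ** Q ** gi) $ b $ d))) = W a"
    using sw.C6[of a] unfolding sL sE .
  show "(\<Sum>d\<in>UNIV. \<Sum>r\<in>UNIV. (gi ** Q) $ d $ r * (- (gi ** (- N b)) $ r $ d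
      + (\<Sum>e\<in>UNIV. L r b e * (gi ** P) $ e $ d) - (\<Sum>e\<in>UNIV. L e b d * (gi ** P) $ r $ e))) = 0"
    using sw.C9[of b] unfolding sL .
  show "(\<Sum>d\<in>UNIV. \<Sum>r\<in>UNIV. (gi ** Q ** gi) $ d $ r * (- N d $ r $ b
      - (\<Sum>e\<in>UNIV. L e d r * Q $ e $ b) - (\<Sum>e\<in>UNIV. L e d b * Q $ r $ e))) = 0"
    using sw.C11[of b] unfolding sL by simp
qed

end

lemma pd_eq: "(f has_derivative f') (at x) \<Longrightarrow> pd f c x = f' (axis c 1)"
  unfolding pd_def using frechet_derivative_at by metis

lemma diff_hasD: "f differentiable (at x) \<Longrightarrow> (f has_derivative frechet_derivative f (at x)) (at x)"
  by (rule frechet_derivative_works[THEN iffD1])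

lemma pd_add: assumes "f differentiable (at x)" "h differentiable (at x)"
  shows "pd (\<lambda>y. f y + h y) c x = pd f c x + pd h c x"
proof -
  have "((\<lambda>y. f y + h y) has_derivative (\<lambda>v. frechet_derivative f (at x) v + frechet_derivative h (at x) v)) (at x)"
    using has_derivative_add[OF diff_hasD[OF assms(1)] diff_hasD[OF assms(2)]] .
  from pd_eq[OF this] show ?thesis by (simp add: pd_def)
qed

lemma pd_diff: assumes "f differentiable (at x)" "h differentiable (at x)"
  shows "pd (\<lambda>y. f y - h y) c x = pd f c x - pd h c x"
proof -
  have "((\<lambda>y. f y - h y) has_derivative (\<lambda>v. frechet_derivative f (at x) v - frechet_derivative h (at x) v)) (at x)"
    using has_derivative_diff[OF diff_hasD[OF assms(1)] diff_hasD[OF assms(2)]] .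
  from pd_eq[OF this] show ?thesis by (simp add: pd_def)
qed

lemma pd_mult: assumes "f differentiable (at x)" "h differentiable (at x)"
  shows "pd (\<lambda>y. f y * h y) c x = f x * pd h c x + pd f c x * h x"
proof -
  have "((\<lambda>y. f y * h y) has_derivative (\<lambda>v. f x * frechet_derivative h (at x) v + frechet_derivative f (at x) v * h x)) (at x)"
    using has_derivative_mult[OF diff_hasD[OF assms(1)] diff_hasD[OF assms(2)]] .
  from pd_eq[OF this] show ?thesis by (simp add: pd_def)
qed

lemma pd_sum: assumes "finite S" "\<And>i. i \<in> S \<Longrightarrow> f i differentiable (at x)"
  shows "pd (\<lambda>y. \<Sum>i\<in>S. f i y) c x = (\<Sum>i\<in>S. pd (f i) c x)"
proof -
  have "((\<lambda>y. \<Sum>i\<in>S. f i y) has_derivative (\<lambda>v. \<Sum>i\<in>S. frechet_derivative (f i) (at x) v)) (at x)"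
    by (rule has_derivative_sum) (rule diff_hasD[OF assms(2)])
  from pd_eq[OF this] show ?thesis by (simp add: pd_def)
qed

lemma pd_const: "pd (\<lambda>y. k) c x = 0"
  using pd_eq[OF has_derivative_const[of k "at x"]] by simp

lemma pd_cong: assumes "open V" "x \<in> V" "\<And>y. y \<in> V \<Longrightarrow> f y = h y" "f differentiable (at x)"
  shows "pd f c x = pd h c x"
  unfolding pd_def using frechet_derivative_transform_within_open[OF assms(4,1,2,3)] by simp

lemma diff_cong: assumes "open V" "x \<in> V" "\<And>y. y \<in> V \<Longrightarrow> f y = h y" "f differentiable (at x)"
  shows "h differentiable (at x)"
  using assms has_derivative_transform_within_open unfolding differentiable_def by blast

lemma differentiable_prod': assumes "finite S" "\<And>i. i \<in> S \<Longrightarrow> f i differentiable (at x)"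
  shows "(\<lambda>y. \<Prod>i\<in>S. (f i y::real)) differentiable (at x)"
proof -
  have "((\<lambda>y. \<Prod>i\<in>S. f i y) has_derivative (\<lambda>v. \<Sum>i\<in>S. frechet_derivative (f i) (at x) v * (\<Prod>j\<in>S - {i}. f j x))) (at x)"
    by (rule has_derivative_prod) (rule diff_hasD[OF assms(2)])
  thus ?thesis unfolding differentiable_def by blast
qed

definition Dm :: "(real^'n \<Rightarrow> real^'n^'n) \<Rightarrow> real^'n \<Rightarrow> 'n \<Rightarrow> real^'n^'n" where
  "Dm F x c = (\<chi> i j. pd (\<lambda>y. F y $ i $ j) c x)"

definition difm :: "(real^'n \<Rightarrow> real^'n^'n) \<Rightarrow> real^'n \<Rightarrow> bool" where
  "difm F x = (\<forall>i j. (\<lambda>y. F y $ i $ j) differentiable (at x))"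

lemma difm_mm: "difm A x \<Longrightarrow> difm B x \<Longrightarrow> difm (\<lambda>y. A y ** B y) x"
  unfolding difm_def matrix_matrix_mult_def by (simp add: differentiable_sum)

lemma Dm_mm: assumes "difm A x" "difm B x"
  shows "Dm (\<lambda>y. A y ** B y) x c = Dm A x c ** B x + A x ** Dm B x c"
proof -
  have dA: "(\<lambda>y. A y $ i $ j) differentiable (at x)" for i j using assms(1) unfolding difm_def by blast
  have dB: "(\<lambda>y. B y $ i $ j) differentiable (at x)" for i j using assms(2) unfolding difm_def by blast
  have "pd (\<lambda>y. \<Sum>k\<in>UNIV. A y $ i $ k * B y $ k $ j) c x
      = (\<Sum>k\<in>UNIV. pd (\<lambda>y. A y $ i $ k * B y $ k $ j) c x)" for i j
    by (rule pd_sum) (auto intro: differentiable_mult dA dB)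
  also have "\<dots> i j = (\<Sum>k\<in>UNIV. A x $ i $ k * pd (\<lambda>y. B y $ k $ j) c x + pd (\<lambda>y. A y $ i $ k) c x * B x $ k $ j)" for i j
    by (rule sum.cong[OF refl]) (rule pd_mult[OF dA dB])
  finally show ?thesis
    unfolding Dm_def matrix_matrix_mult_def by (simp add: vec_eq_iff sum.distrib)
qed

lemma difm_add: "difm A x \<Longrightarrow> difm B x \<Longrightarrow> difm (\<lambda>y. A y + B y) x"
  unfolding difm_def by simp
lemma Dm_add: "difm A x \<Longrightarrow> difm B x \<Longrightarrow> Dm (\<lambda>y. A y + B y) x c = Dm A x c + Dm B x c"
  unfolding difm_def Dm_def by (simp add: vec_eq_iff pd_add)
lemma difm_diff: "difm A x \<Longrightarrow> difm B x \<Longrightarrow> difm (\<lambda>y. A y - B y) x"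
  unfolding difm_def by simp
lemma Dm_diff: "difm A x \<Longrightarrow> difm B x \<Longrightarrow> Dm (\<lambda>y. A y - B y) x c = Dm A x c - Dm B x c"
  unfolding difm_def Dm_def by (simp add: vec_eq_iff pd_diff)
lemma Dm_const: "Dm (\<lambda>y. K) x c = 0"
  unfolding Dm_def by (simp add: vec_eq_iff pd_const)
lemma Dm_cong: assumes "open V" "x \<in> V" "\<And>y. y \<in> V \<Longrightarrow> A y = B y" "difm A x"
  shows "Dm A x c = Dm B x c"
proof -
  have "pd (\<lambda>y. A y $ i $ j) c x = pd (\<lambda>y. B y $ i $ j) c x" for i j
    by (rule pd_cong[OF assms(1,2)]) (use assms(3,4) in \<open>auto simp: difm_def\<close>)
  thus ?thesis unfolding Dm_def by (simp add: vec_eq_iff)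
qed
lemma difm_cong: assumes "open V" "x \<in> V" "\<And>y. y \<in> V \<Longrightarrow> A y = B y" "difm A x"
  shows "difm B x"
  unfolding difm_def
proof (intro allI)
  fix i j show "(\<lambda>y. B y $ i $ j) differentiable (at x)"
    by (rule diff_cong[OF assms(1,2), of "\<lambda>y. A y $ i $ j"]) (use assms(3,4) in \<open>auto simp: difm_def\<close>)
qed

lemma smooth_difm: "smooth_tfield U T \<Longrightarrow> x \<in> U \<Longrightarrow> difm T x"
proof -
  assume T: "smooth_tfield U T" and x: "x \<in> U"
  show ?thesis unfolding difm_def
  proof (intro allI)
    fix i j
    have "Ck_on (Suc 0) U (\<lambda>y. T y $ i $ j)" using T unfolding smooth_tfield_def smooth_on_def by blast
    thus "(\<lambda>y. T y $ i $ j) differentiable (at x)" using x by simp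
  qed
qed


locale metric =
  fixes U :: "(real^'n::finite) set" and g :: "'n tfield"
  assumes U_open: "open U" and g_smooth: "smooth_tfield U g"
    and g_sym: "\<forall>x\<in>U. transpose (g x) = g x" and g_nondeg: "\<forall>x\<in>U. invertible (g x)"
begin

lemma ginv_props: assumes "x \<in> U" shows "g x ** ginv g x = mat 1" "ginv g x ** g x = mat 1"
proof -
  have "\<exists>A'. g x ** A' = mat 1 \<and> A' ** g x = mat 1" using g_nondeg assms unfolding invertible_def by blast
  hence "g x ** matrix_inv (g x) = mat 1 \<and> matrix_inv (g x) ** g x = mat 1"
    unfolding matrix_inv_def by (rule someI_ex)
  thus "g x ** ginv g x = mat 1" "ginv g x ** g x = mat 1" unfolding ginv_def by auto
qed

lemma ginv_sym: assumes "x \<in> U" shows "transpose (ginv g x) = ginv g x"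
proof -
  have "transpose (ginv g x) = transpose (ginv g x) ** (g x ** ginv g x)"
    using ginv_props[OF assms] by simp
  also have "\<dots> = transpose (ginv g x) ** transpose (g x) ** ginv g x"
    using g_sym assms by (simp add: matrix_mul_assoc)
  also have "transpose (ginv g x) ** transpose (g x) = mat 1"
    using ginv_props[OF assms] by (metis matrix_transpose_mul transpose_mat)
  finally show ?thesis by simp
qed

lemma ginv_cramer: assumes "x \<in> U"
  shows "ginv g x $ k $ j = det (\<chi> i l. if l = k then axis j 1 $ i else g x $ i $ l) / det (g x)"
proof -
  let ?B = "ginv g x"
  have d: "det (g x) \<noteq> 0" using g_nondeg assms invertible_det_nz by blast
  have "g x *v (?B *v axis j 1) = axis j 1"
    using ginv_props[OF assms] by (simp add: matrix_vector_mul_assoc)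
  hence "?B *v axis j 1 = (\<chi> k. det (\<chi> i l. if l = k then axis j 1 $ i else g x $ i $ l) / det (g x))"
    using cramer[OF d] by blast
  hence "(?B *v axis j 1) $ k = det (\<chi> i l. if l = k then axis j 1 $ i else g x $ i $ l) / det (g x)"
    by simp
  moreover have "(?B *v axis j 1) $ k = ?B $ k $ j"
    by (simp add: matrix_vector_mult_def axis_def if_distrib cong: if_cong)
  ultimately show ?thesis by simp
qed

lemma g_difm: "x \<in> U \<Longrightarrow> difm g x"
  using smooth_difm[OF g_smooth] .

lemma det_differentiable: assumes "difm F x" shows "(\<lambda>y. det (F y)) differentiable (at x)"
proof -
  have d: "(\<lambda>y. F y $ i $ j) differentiable (at x)" for i j using assms unfolding difm_def by blast
  show ?thesis unfolding det_def
    by (rule differentiable_sum)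
       (auto intro!: differentiable_mult differentiable_prod' d simp: finite_permutations)
qed

lemma difm_ginv: assumes x: "x \<in> U" shows "difm (ginv g) x"
  unfolding difm_def
proof (intro allI)
  fix k j
  let ?F = "\<lambda>y. (\<chi> i l. if l = k then axis j 1 $ i else g y $ i $ l) :: real^'n^'n"
  have dg: "difm g x" by (rule g_difm[OF x])
  have "difm ?F x"
    unfolding difm_def
  proof (intro allI)
    fix i l
    show "(\<lambda>y. ?F y $ i $ l) differentiable (at x)"
      using dg by (cases "l = k") (auto simp: difm_def)
  qed
  hence d: "(\<lambda>y. det (?F y) / det (g y)) differentiable (at x)"
    using det_differentiable[OF dg] det_differentiable g_nondeg x invertible_det_nz
    by (intro differentiable_divide) auto
  show "(\<lambda>y. ginv g y $ k $ j) differentiable (at x)"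
    by (rule diff_cong[OF U_open x _ d]) (simp add: ginv_cramer)
qed

lemma Dgi: assumes x: "x \<in> U"
  shows "Dm (ginv g) x a = - (ginv g x ** Dm g x a ** ginv g x)"
proof -
  have "Dm (\<lambda>y. ginv g y ** g y) x a = Dm (\<lambda>y. mat 1) x a"
    by (rule Dm_cong[OF U_open x]) (auto simp: ginv_props intro: difm_mm difm_ginv g_difm x)
  hence "Dm (ginv g) x a ** g x + ginv g x ** Dm g x a = 0"
    by (simp add: Dm_mm difm_ginv g_difm x Dm_const)
  hence "(Dm (ginv g) x a ** g x + ginv g x ** Dm g x a) ** ginv g x = 0" by simp
  hence "Dm (ginv g) x a + ginv g x ** Dm g x a ** ginv g x = 0"
    by (simp add: mm_add_r ginv_props[OF x] flip: matrix_mul_assoc)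
  thus ?thesis by (simp add: eq_neg_iff_add_eq_0)
qed

definition "Gm x a = (\<chi> d b. christoffel g x d a b)"

lemma dg_sym: assumes x: "x \<in> U" shows "pd (\<lambda>y. g y $ b $ c) a x = pd (\<lambda>y. g y $ c $ b) a x"
proof (rule pd_cong[OF U_open x])
  show "(\<lambda>y. g y $ b $ c) differentiable at x" using g_difm[OF x] by (simp add: difm_def)
  fix y assume "y \<in> U"
  hence "transpose (g y) = g y" using g_sym by blast
  thus "g y $ b $ c = g y $ c $ b" by (metis tr_entry)
qed

lemma lowered: assumes x: "x \<in> U"
  shows "(\<Sum>d\<in>UNIV. g x $ c $ d * christoffel g x d a b)
    = (1/2) * (pd (\<lambda>y. g y $ c $ b) a x + pd (\<lambda>y. g y $ c $ a) b x - pd (\<lambda>y. g y $ a $ b) c x)"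
proof -
  let ?F = "\<lambda>e. pd (\<lambda>y. g y $ e $ b) a x + pd (\<lambda>y. g y $ e $ a) b x - pd (\<lambda>y. g y $ a $ b) e x"
  have "(\<Sum>d\<in>UNIV. g x $ c $ d * christoffel g x d a b)
      = (1/2) * (\<Sum>d\<in>UNIV. g x $ c $ d * (\<Sum>e\<in>UNIV. ginv g x $ d $ e * ?F e))"
    unfolding christoffel_def by (simp add: sum_distrib_left mult_ac)
  also have "(\<Sum>d\<in>UNIV. g x $ c $ d * (\<Sum>e\<in>UNIV. ginv g x $ d $ e * ?F e))
      = (\<Sum>e\<in>UNIV. (g x ** ginv g x) $ c $ e * ?F e)"
    unfolding mm_entry sum_distrib_left sum_distrib_right
    by (subst sum.swap) (simp add: mult.assoc)
  also have "\<dots> = (\<Sum>e\<in>UNIV. if c = e then ?F e else 0)"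
    by (rule sum.cong[OF refl]) (simp add: ginv_props[OF x] mat_def)
  also have "\<dots> = ?F c" by simp
  finally show ?thesis .
qed

lemma metric_compat: assumes x: "x \<in> U"
  shows "Dm g x a = transpose (Gm x a) ** g x + g x ** Gm x a"
proof -
  have gs: "g x $ i $ j = g x $ j $ i" for i j using g_sym x by (metis tr_entry)
  have "pd (\<lambda>y. g y $ b $ c) a x
     = (\<Sum>d\<in>UNIV. christoffel g x d a b * g x $ d $ c) + (\<Sum>d\<in>UNIV. g x $ b $ d * christoffel g x d a c)" for b c
  proof -
    have "(\<Sum>d\<in>UNIV. christoffel g x d a b * g x $ d $ c) = (\<Sum>d\<in>UNIV. g x $ c $ d * christoffel g x d a b)"
      by (simp add: gs[of _ c] mult.commute)
    also have "\<dots> = (1/2) * (pd (\<lambda>y. g y $ c $ b) a x + pd (\<lambda>y. g y $ c $ a) b x - pd (\<lambda>y. g y $ a $ b) c x)"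
      by (rule lowered[OF x])
    finally have 1: "(\<Sum>d\<in>UNIV. christoffel g x d a b * g x $ d $ c) = \<dots>" .
    have 2: "(\<Sum>d\<in>UNIV. g x $ b $ d * christoffel g x d a c)
       = (1/2) * (pd (\<lambda>y. g y $ b $ c) a x + pd (\<lambda>y. g y $ b $ a) c x - pd (\<lambda>y. g y $ a $ c) b x)"
      by (rule lowered[OF x])
    show ?thesis unfolding 1 2
      using dg_sym[OF x, of c b a] dg_sym[OF x, of c a b] dg_sym[OF x, of b a c]
      by (simp add: field_simps)
  qed
  thus ?thesis unfolding Gm_def by (simp add: vec_eq_iff mm_entry tr_entry Dm_def)
qed

lemma cov02_mat: "cov02 Gam T x a b c
   = (Dm T x a - transpose (\<chi> d b. Gam x d a b) ** T x - T x ** (\<chi> d b. Gam x d a b)) $ b $ c"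
  unfolding cov02_def Dm_def by (simp add: mm_entry tr_entry mult.commute)
lemma cov20_mat: "cov20 Gam T x a b c
   = (Dm T x a + (\<chi> d b. Gam x d a b) ** T x + T x ** transpose (\<chi> d b. Gam x d a b)) $ b $ c"
  unfolding cov20_def Dm_def by (simp add: mm_entry tr_entry mult.commute)
lemma cov11_mat: "cov11 Gam T x a b c
   = (Dm T x a + (\<chi> d b. Gam x d a b) ** T x - T x ** (\<chi> d b. Gam x d a b)) $ b $ c"
  unfolding cov11_def Dm_def by (simp add: mm_entry tr_entry mult.commute)

lemma up1_eq: "up1 g T x = ginv g x ** T x"
  unfolding up1_def by (simp add: matrix_matrix_mult_def)

lemma up2_eq: assumes x: "x \<in> U" shows "up2 g T x = ginv g x ** T x ** ginv g x"
proof -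
  have s: "ginv g x $ b $ d = ginv g x $ d $ b" for b d using ginv_sym[OF x] by (metis tr_entry)
  show ?thesis unfolding up2_def
    by (simp add: vec_eq_iff mm_entry sum_distrib_left sum_distrib_right s[of _ ] mult_ac)
       (subst sum.swap, simp add: mult_ac)
qed

end

lemma ext1: "(A::real^'n^'n) ** B = mat 1 \<Longrightarrow> X ** A ** B = X"
  by (metis matrix_mul_assoc matrix_mul_rid)

lemma alg_up2: fixes gi g T DT G :: "real^'n::finite^'n"
  assumes "gi ** g = mat 1" "g ** gi = mat 1"
  shows "(- (gi ** (transpose G ** g + g ** G) ** gi) ** T + gi ** DT) ** gi
     + gi ** T ** (- (gi ** (transpose G ** g + g ** G) ** gi))
     + G ** (gi ** T ** gi) + gi ** T ** gi ** transpose G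
     = gi ** (DT - transpose G ** T - T ** G) ** gi"
  using assms by (simp add: mx ext1[OF assms(1)] ext1[OF assms(2)] algebra_simps)

lemma alg_up1: fixes gi g T DT G :: "real^'n::finite^'n"
  assumes "gi ** g = mat 1" "g ** gi = mat 1"
  shows "- (gi ** (transpose G ** g + g ** G) ** gi) ** T + gi ** DT
     + G ** (gi ** T) - gi ** T ** G
     = gi ** (DT - transpose G ** T - T ** G)"
  using assms by (simp add: mx ext1[OF assms(1)] ext1[OF assms(2)] algebra_simps)

lemma alg_rel: fixes gi g P DP G :: "real^'n::finite^'n"
  assumes "gi ** g = mat 1" "g ** gi = mat 1" "P ** gi ** P = P"
    and "DP = DP ** (gi ** P) + P ** (- (gi ** (transpose G ** g + g ** G) ** gi) ** P + gi ** DP)"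
  shows "DP - transpose G ** P - P ** G
     = (DP - transpose G ** P - P ** G) ** gi ** P + P ** gi ** (DP - transpose G ** P - P ** G)"
proof -
  have e: "X ** P ** gi ** P = X ** P" for X using assms(3) by (metis matrix_mul_assoc)
  have "DP = DP ** gi ** P + P ** gi ** DP - P ** gi ** transpose G ** P - P ** G ** gi ** P"
    using assms(4) by (simp add: mx ext1[OF assms(1)] ext1[OF assms(2)] algebra_simps)
  thus ?thesis
    using assms by (simp add: mx ext1[OF assms(1)] ext1[OF assms(2)] e algebra_simps)
qed


context metric begin

definition "Cv T x a = (\<chi> b c. cov02 (christoffel g) T x a b c)"

lemma Cv_eq: "Cv T x a = Dm T x a - transpose (Gm x a) ** T x - T x ** Gm x a"
  unfolding Cv_def Gm_def by (simp add: vec_eq_iff cov02_mat[of _ _ _ a])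

lemma Gm_eq: "(\<chi> d b. christoffel g x d a b) = Gm x a"
  unfolding Gm_def ..

lemma LC_up2: assumes x: "x \<in> U" and T: "difm T x"
  shows "cov20 (christoffel g) (up2 g T) x a b c = (ginv g x ** Cv T x a ** ginv g x) $ b $ c"
proof -
  have dgi: "difm (ginv g) x" by (rule difm_ginv[OF x])
  have "Dm (\<lambda>y. ginv g y ** T y ** ginv g y) x a = Dm (up2 g T) x a"
    by (rule Dm_cong[OF U_open x]) (auto simp: up2_eq intro!: difm_mm dgi T)
  hence D: "Dm (up2 g T) x a = (Dm (ginv g) x a ** T x + ginv g x ** Dm T x a) ** ginv g x
       + ginv g x ** T x ** Dm (ginv g) x a"
    by (simp add: Dm_mm difm_mm dgi T)
  show ?thesis
    unfolding cov20_mat Gm_eq D Cv_eq Dgi[OF x] metric_compat[OF x] up2_eq[OF x]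
    using alg_up2[OF ginv_props(2)[OF x] ginv_props(1)[OF x]] by simp
qed

lemma LC_up1: assumes x: "x \<in> U" and T: "difm T x"
  shows "cov11 (christoffel g) (up1 g T) x a b c = (ginv g x ** Cv T x a) $ b $ c"
proof -
  have dgi: "difm (ginv g) x" by (rule difm_ginv[OF x])
  have D: "Dm (up1 g T) x a = Dm (ginv g) x a ** T x + ginv g x ** Dm T x a"
    unfolding up1_eq[abs_def] by (simp add: Dm_mm dgi T)
  show ?thesis
    unfolding cov11_mat Gm_eq D Cv_eq Dgi[OF x] metric_compat[OF x] up1_eq
    using alg_up1[OF ginv_props(2)[OF x] ginv_props(1)[OF x]] by simp
qed

lemma Cv_compl: assumes x: "x \<in> U" and P: "difm P x" and Q: "difm Q x"
  and PQ: "\<forall>y\<in>U. P y + Q y = g y"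
  shows "Cv Q x a = - Cv P x a"
proof -
  have "Dm (\<lambda>y. g y - P y) x a = Dm Q x a"
    by (rule Dm_cong[OF U_open x]) (use PQ in \<open>auto simp: algebra_simps intro!: difm_diff g_difm x P\<close>)
  hence DQ: "Dm Q x a = Dm g x a - Dm P x a" by (simp add: Dm_diff g_difm[OF x] P)
  have Qx: "Q x = g x - P x" using PQ x by (auto simp: algebra_simps)
  show ?thesis unfolding Cv_eq DQ metric_compat[OF x] Qx
    by (simp add: mm_diff_l mm_diff_r algebra_simps)
qed

lemma Cv_sym: assumes x: "x \<in> U" and P: "difm P x" and Ps: "\<forall>y\<in>U. transpose (P y) = P y"
  shows "transpose (Cv P x a) = Cv P x a"
proof -
  have "Dm (\<lambda>y. transpose (P y)) x a = Dm P x a"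
    by (rule Dm_cong[OF U_open x]) (use Ps P in \<open>auto simp: difm_def transpose_def\<close>)
  hence "transpose (Dm P x a) = Dm P x a"
    unfolding Dm_def by (simp add: transpose_def vec_eq_iff)
  moreover have "transpose (P x) = P x" using Ps x by blast
  ultimately show ?thesis
    unfolding Cv_eq by (simp add: transpose_def vec_eq_iff mm_entry mult.commute algebra_simps)
qed

lemma Cv_rel: assumes x: "x \<in> U" and P: "difm P x"
  and proj: "\<forall>y\<in>U. P y ** up1 g P y = P y"
  shows "Cv P x a = Cv P x a ** ginv g x ** P x + P x ** ginv g x ** Cv P x a"
proof -
  have dgi: "difm (ginv g) x" by (rule difm_ginv[OF x])
  have "Dm (\<lambda>y. P y ** (ginv g y ** P y)) x a = Dm P x a"
    by (rule Dm_cong[OF U_open x]) (use proj in \<open>auto simp: up1_eq intro!: difm_mm dgi P\<close>)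
  hence e: "Dm P x a = Dm P x a ** (ginv g x ** P x) + P x ** (Dm (ginv g) x a ** P x + ginv g x ** Dm P x a)"
    by (simp add: Dm_mm difm_mm dgi P)
  have pp: "P x ** ginv g x ** P x = P x" using proj x by (simp add: up1_eq matrix_mul_assoc)
  show ?thesis unfolding Cv_eq
    by (rule alg_rel[OF ginv_props(2)[OF x] ginv_props(1)[OF x] pp])
       (use e in \<open>simp add: Dgi[OF x] metric_compat[OF x]\<close>)
qed

end

lemma biconf_eq: "biconf p g P Q = (\<lambda>x a b c. christoffel g x a b c + Lten p g P Q x a b c)"
  unfolding biconf_def by (intro ext) simp

lemma cov20_split: "cov20 (\<lambda>x a b c. G1 x a b c + G2 x a b c) T x a b c
  = cov20 G1 T x a b c + (\<Sum>d\<in>UNIV. G2 x b a d * T x $ d $ c) + (\<Sum>d\<in>UNIV. G2 x c a d * T x $ b $ d)"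
  unfolding cov20_def by (simp add: ring_distribs sum.distrib)
lemma cov02_split: "cov02 (\<lambda>x a b c. G1 x a b c + G2 x a b c) T x a b c
  = cov02 G1 T x a b c - (\<Sum>d\<in>UNIV. G2 x d a b * T x $ d $ c) - (\<Sum>d\<in>UNIV. G2 x d a c * T x $ b $ d)"
  unfolding cov02_def by (simp add: ring_distribs sum.distrib)
lemma cov11_split: "cov11 (\<lambda>x a b c. G1 x a b c + G2 x a b c) T x a b c
  = cov11 G1 T x a b c + (\<Sum>d\<in>UNIV. G2 x b a d * T x $ d $ c) - (\<Sum>d\<in>UNIV. G2 x d a c * T x $ b $ d)"
  unfolding cov11_def by (simp add: ring_distribs sum.distrib)

theorem mainTheorem2:
  fixes U :: "(real^'n) set" and g P Q :: "'n tfield" and p :: nat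
  assumes U_open: "open U"
    and smooth: "smooth_tfield U g" "smooth_tfield U P" "smooth_tfield U Q"
    and g_sym: "\<forall>x\<in>U. transpose (g x) = g x"
    and g_nondeg: "\<forall>x\<in>U. invertible (g x)"
    and P_sym: "\<forall>x\<in>U. transpose (P x) = P x"
    and Pi_sym: "\<forall>x\<in>U. transpose (Q x) = Q x"
    and compl: "\<forall>x\<in>U. P x + Q x = g x"
    and P_proj: "\<forall>x\<in>U. \<forall>a b. (\<Sum>q\<in>UNIV. P x $ a $ q * up1 g P x $ q $ b) = P x $ a $ b"
    and Pi_proj: "\<forall>x\<in>U. \<forall>a b. (\<Sum>q\<in>UNIV. Q x $ a $ q * up1 g Q x $ q $ b) = Q x $ a $ b"
    and orth: "\<forall>x\<in>U. \<forall>a b. (\<Sum>q\<in>UNIV. P x $ a $ q * up1 g Q x $ q $ b) = 0"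
    and rank: "\<forall>x\<in>U. (\<Sum>a\<in>UNIV. up1 g P x $ a $ a) = real p"
    and p_bounds: "1 \<le> p" "p \<le> CARD('n) - 1"
  shows "\<forall>x\<in>U.
    (let G = biconf p g P Q;
         E = Evec g P x; W = Wvec g P Q x
     in (\<forall>b. (\<Sum>a\<in>UNIV. cov20 G (up2 g P) x a a b) = 0)
      \<and> (\<forall>b. (\<Sum>a\<in>UNIV. cov20 G (up2 g Q) x a a b) = 0)
      \<and> (\<forall>b. (\<Sum>a\<in>UNIV. cov11 G (up1 g P) x a a b) = 0)
      \<and> (\<forall>b. (\<Sum>a\<in>UNIV. cov11 G (up1 g Q) x a a b) = 0)
      \<and> (\<forall>a. (\<Sum>b\<in>UNIV. \<Sum>c\<in>UNIV. up2 g P x $ b $ c * cov02 G P x a b c) = - E a)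
      \<and> (\<forall>a. (\<Sum>b\<in>UNIV. \<Sum>c\<in>UNIV. P x $ b $ c * cov20 G (up2 g P) x a b c) = E a)
      \<and> (\<forall>a. (\<Sum>b\<in>UNIV. \<Sum>c\<in>UNIV. up2 g Q x $ b $ c * cov02 G Q x a b c) = - W a)
      \<and> (\<forall>a. (\<Sum>b\<in>UNIV. \<Sum>c\<in>UNIV. Q x $ b $ c * cov20 G (up2 g Q) x a b c) = W a)
      \<and> (\<forall>b. (\<Sum>d\<in>UNIV. \<Sum>r\<in>UNIV. up1 g P x $ d $ r * cov11 G (up1 g Q) x b r d) = 0)
      \<and> (\<forall>b. (\<Sum>d\<in>UNIV. \<Sum>r\<in>UNIV. up1 g Q x $ d $ r * cov11 G (up1 g P) x b r d) = 0)
      \<and> (\<forall>b. (\<Sum>d\<in>UNIV. \<Sum>r\<in>UNIV. up2 g P x $ d $ r * cov02 G P x d r b) = 0)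
      \<and> (\<forall>b. (\<Sum>d\<in>UNIV. \<Sum>r\<in>UNIV. up2 g Q x $ d $ r * cov02 G Q x d r b) = 0))"
proof
  fix x assume x: "x \<in> U"
  interpret m: metric U g by unfold_locales (use U_open smooth g_sym g_nondeg in auto)
  have dP: "difm P x" by (rule smooth_difm[OF smooth(2) x])
  have dQ: "difm Q x" by (rule smooth_difm[OF smooth(3) x])
  have projm: "\<forall>y\<in>U. P y ** up1 g P y = P y"
    using P_proj by (auto simp: vec_eq_iff mm_entry)
  have projQm: "\<forall>y\<in>U. Q y ** up1 g Q y = Q y"
    using Pi_proj by (auto simp: vec_eq_iff mm_entry)
  have orthm: "P x ** up1 g Q x = 0"
    using orth x by (auto simp: vec_eq_iff mm_entry)
  let ?gi = "ginv g x"
  let ?N = "\<lambda>a. m.Cv P x a"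
  have cardpos: "CARD('n) \<ge> 1" by (simp add: Suc_leI)
  have bcx: "bc (g x) ?gi (P x) (Q x) ?N (real p)"
  proof unfold_locales
    show "transpose (g x) = g x" using g_sym x by blast
    show "transpose ?gi = ?gi" by (rule m.ginv_sym[OF x])
    show "?gi ** g x = mat 1" "g x ** ?gi = mat 1" using m.ginv_props[OF x] by auto
    show "transpose (P x) = P x" using P_sym x by blast
    show "transpose (Q x) = Q x" using Pi_sym x by blast
    show "P x + Q x = g x" using compl x by blast
    show "P x ** ?gi ** P x = P x" using projm x by (simp add: m.up1_eq matrix_mul_assoc)
    show "Q x ** ?gi ** Q x = Q x" using projQm x by (simp add: m.up1_eq matrix_mul_assoc)
    show "P x ** ?gi ** Q x = 0" using orthm by (simp add: m.up1_eq matrix_mul_assoc)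
    show "trace (?gi ** P x) = real p" using rank x by (simp add: trace_def m.up1_eq)
    show "real p > 0" using p_bounds by simp
    show "real CARD('n) - real p > 0" using p_bounds cardpos by linarith
    fix a
    show "transpose (?N a) = ?N a" by (rule m.Cv_sym[OF x dP P_sym])
    show "?N a = ?N a ** ?gi ** P x + P x ** ?gi ** ?N a" by (rule m.Cv_rel[OF x dP projm])
  qed
  interpret b: bc "g x" ?gi "P x" "Q x" ?N "real p" by (rule bcx)
  have Mq: "Mten g P x a b c = b.M a b c" for a b c
    unfolding Mten_def b.M_def by (simp add: nabla_def m.Cv_def)
  have Eq: "Evec g P x a = b.E a" for a
    unfolding Evec_def b.E_def b.P2_def Mq m.up2_eq[OF x] ..
  have Wq: "Wvec g P Q x a = b.W a" for a
    unfolding Wvec_def b.W_def b.Q2_def Mq m.up2_eq[OF x] ..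
  have Lq: "Lten p g P Q x a b c = b.L a b c" for a b c
    unfolding Lten_def b.L_def Eq Wq b.p1_def b.q1_def m.up1_eq Mq ..
  have CvQ: "m.Cv Q x a = - ?N a" for a
    by (rule m.Cv_compl[OF x dP dQ compl])
  have c02P: "cov02 (christoffel g) P x a b c = ?N a $ b $ c" for a b c
    unfolding m.Cv_def by simp
  have c02Q: "cov02 (christoffel g) Q x a b c = - (?N a $ b $ c)" for a b c
    using CvQ[of a] unfolding m.Cv_def by (simp add: vec_eq_iff)
  have c20P: "cov20 (christoffel g) (up2 g P) x a b c = (?gi ** ?N a ** ?gi) $ b $ c" for a b c
    by (rule m.LC_up2[OF x dP])
  have c20Q: "cov20 (christoffel g) (up2 g Q) x a b c = (?gi ** (- ?N a) ** ?gi) $ b $ c" for a b c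
    using m.LC_up2[OF x dQ] CvQ by simp
  have c11P: "cov11 (christoffel g) (up1 g P) x a b c = (?gi ** ?N a) $ b $ c" for a b c
    by (rule m.LC_up1[OF x dP])
  have c11Q: "cov11 (christoffel g) (up1 g Q) x a b c = (?gi ** (- ?N a)) $ b $ c" for a b c
    using m.LC_up1[OF x dQ] CvQ by simp
  note simps = biconf_eq cov20_split cov02_split cov11_split Lq c02P c02Q c20P c20Q c11P c11Q
    m.up2_eq[OF x] m.up1_eq
  show "let G = biconf p g P Q;
         E = Evec g P x; W = Wvec g P Q x
     in (\<forall>b. (\<Sum>a\<in>UNIV. cov20 G (up2 g P) x a a b) = 0)
      \<and> (\<forall>b. (\<Sum>a\<in>UNIV. cov20 G (up2 g Q) x a a b) = 0)
      \<and> (\<forall>b. (\<Sum>a\<in>UNIV. cov11 G (up1 g P) x a a b) = 0)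
      \<and> (\<forall>b. (\<Sum>a\<in>UNIV. cov11 G (up1 g Q) x a a b) = 0)
      \<and> (\<forall>a. (\<Sum>b\<in>UNIV. \<Sum>c\<in>UNIV. up2 g P x $ b $ c * cov02 G P x a b c) = - E a)
      \<and> (\<forall>a. (\<Sum>b\<in>UNIV. \<Sum>c\<in>UNIV. P x $ b $ c * cov20 G (up2 g P) x a b c) = E a)
      \<and> (\<forall>a. (\<Sum>b\<in>UNIV. \<Sum>c\<in>UNIV. up2 g Q x $ b $ c * cov02 G Q x a b c) = - W a)
      \<and> (\<forall>a. (\<Sum>b\<in>UNIV. \<Sum>c\<in>UNIV. Q x $ b $ c * cov20 G (up2 g Q) x a b c) = W a)
      \<and> (\<forall>b. (\<Sum>d\<in>UNIV. \<Sum>r\<in>UNIV. up1 g P x $ d $ r * cov11 G (up1 g Q) x b r d) = 0)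
      \<and> (\<forall>b. (\<Sum>d\<in>UNIV. \<Sum>r\<in>UNIV. up1 g Q x $ d $ r * cov11 G (up1 g P) x b r d) = 0)
      \<and> (\<forall>b. (\<Sum>d\<in>UNIV. \<Sum>r\<in>UNIV. up2 g P x $ d $ r * cov02 G P x d r b) = 0)
      \<and> (\<forall>b. (\<Sum>d\<in>UNIV. \<Sum>r\<in>UNIV. up2 g Q x $ d $ r * cov02 G Q x d r b) = 0)"
    unfolding Let_def
  proof (intro conjI allI)
    fix b
    show "(\<Sum>a\<in>UNIV. cov20 (biconf p g P Q) (up2 g P) x a a b) = 0"
      unfolding simps by (rule b.C1)
  next
    fix b
    show "(\<Sum>a\<in>UNIV. cov20 (biconf p g P Q) (up2 g Q) x a a b) = 0"
      unfolding simps by (rule b.Q_conclusions(1))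
  next
    fix b
    show "(\<Sum>a\<in>UNIV. cov11 (biconf p g P Q) (up1 g P) x a a b) = 0"
      unfolding simps by (rule b.C3)
  next
    fix b
    show "(\<Sum>a\<in>UNIV. cov11 (biconf p g P Q) (up1 g Q) x a a b) = 0"
      unfolding simps by (rule b.Q_conclusions(2))
  next
    fix a
    show "(\<Sum>b\<in>UNIV. \<Sum>c\<in>UNIV. up2 g P x $ b $ c * cov02 (biconf p g P Q) P x a b c) = - Evec g P x a"
      unfolding simps Eq by (rule b.C5)
  next
    fix a
    show "(\<Sum>b\<in>UNIV. \<Sum>c\<in>UNIV. P x $ b $ c * cov20 (biconf p g P Q) (up2 g P) x a b c) = Evec g P x a"
      unfolding simps Eq by (rule b.C6)
  next
    fix a
    show "(\<Sum>b\<in>UNIV. \<Sum>c\<in>UNIV. up2 g Q x $ b $ c * cov02 (biconf p g P Q) Q x a b c) = - Wvec g P Q x a"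
      unfolding simps Wq by (rule b.Q_conclusions(3))
  next
    fix a
    show "(\<Sum>b\<in>UNIV. \<Sum>c\<in>UNIV. Q x $ b $ c * cov20 (biconf p g P Q) (up2 g Q) x a b c) = Wvec g P Q x a"
      unfolding simps Wq by (rule b.Q_conclusions(4))
  next
    fix b
    show "(\<Sum>d\<in>UNIV. \<Sum>r\<in>UNIV. up1 g P x $ d $ r * cov11 (biconf p g P Q) (up1 g Q) x b r d) = 0"
      unfolding simps using b.C9[of b] by (simp add: mm_neg_r)
  next
    fix b
    show "(\<Sum>d\<in>UNIV. \<Sum>r\<in>UNIV. up1 g Q x $ d $ r * cov11 (biconf p g P Q) (up1 g P) x b r d) = 0"
      unfolding simps using b.Q_conclusions(5)[of b] by (simp add: mm_neg_r)
  next
    fix b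
    show "(\<Sum>d\<in>UNIV. \<Sum>r\<in>UNIV. up2 g P x $ d $ r * cov02 (biconf p g P Q) P x d r b) = 0"
      unfolding simps by (rule b.C11)
  next
    fix b
    show "(\<Sum>d\<in>UNIV. \<Sum>r\<in>UNIV. up2 g Q x $ d $ r * cov02 (biconf p g P Q) Q x d r b) = 0"
      unfolding simps by (rule b.Q_conclusions(6))
  qed
qed


end
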